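(* Let $(\mathbf X,\mathbf Y)$ be a general correlated source which is uniformly integrable. Then $R_{SW}(\mathbf X|\mathbf Y)=\overline H_s(\mathbf X|\mathbf Y)$.
   Context: A general correlated source $(\mathbf X,\mathbf Y)=\{(X^n,Y^n)\}_{n\ge1}$ is an arbitrary sequence of pairs of random variables, $(X^n,Y^n)$ on $\mathcal X^n\times\mathcal Y^n$ with $\mathcal X,\mathcal Y$ finite or countably infinite, joint distribution $P_{X^nY^n}$ (no structural assumptions; all marginal probabilities positive). Logs base 2. Uniform integrability: a sequence $\{Z_n\}$ of discrete real random variables is uniformly integrable if $\lim_{u\to\infty}\sup_{n}\sum_{z:|z|\ge u}P_{Z_n}(z)|z|=0$; the source is called uniformly integrable if $\{\frac1n\log\frac1{P_{X^n|Y^n}(X^n|Y^n)}\}_n$ is. For $x^n\in\mathcal X^n$ and $\varepsilon\in(0,1]$, $\overline h^\varepsilon(x^n)=\inf\{a\in\mathbb R:\sum_{y^n:\log(1/P_{X^n|Y^n}(x^n|y^n))>a}P_{Y^n|X^n}(y^n|x^n)\le\varepsilon\}$; $\overline H_s^\varepsilon(X^n|Y^n)=\sum_{x^n}P_{X^n}(x^n)\overline h^\varepsilon(x^n)$; $\overline H_s(\mathbf X|\mathbf Y)=\lim_{\varepsilon\downarrow0}\limsup_n\frac1n\overline H_s^\varepsilon(X^n|Y^n)$. Slepian–Wolf (SW) code of blocklength $n$: $(\varphi_n,\psi_n)$ with encoder $\varphi_n:\mathcal X^n\to\{0,1\}^*$ whose set of codewords is prefix-free and decoder $\psi_n:\{0,1\}^*\times\mathcal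 Y^n\to\mathcal X^n$; error probability $\Pr\{\psi_n(\varphi_n(X^n),Y^n)\ne X^n\}$; $\ell_n(x^n)$ the length of $\varphi_n(x^n)$. A rate $R$ is weakly lossless achievable if there are SW codes with error probability $\to0$ and $\limsup_n\frac1n\mathbb E[\ell_n(X^n)]\le R$; $R_{SW}(\mathbf X|\mathbf Y)$ is the infimum of such rates. *)

theory Defs
  imports "HOL-Probability.Probability" "HOL-Library.Sublist"
begin

text \<open>A general correlated source over countable alphabets (the types 'a and 'b):
  for every blocklength n a joint pmf P n of (X^n, Y^n) on lists of length n.
  The value at n = 0 is irrelevant.\<close>

definition general_source :: "(nat \<Rightarrow> ('a::countable list \<times> 'b::countable list) pmf) \<Rightarrow> bool" where
  "general_source P \<longleftrightarrow>
     (\<forall>n. set_pmf (P n) \<subseteq> {(x, y). length x = n \<and> length y = n}) \<and>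
     (\<forall>n x. length x = n \<longrightarrow> pmf (map_pmf fst (P n)) x > 0) \<and>
     (\<forall>n y. length y = n \<longrightarrow> pmf (map_pmf snd (P n)) y > 0)"

definition condXY :: "(nat \<Rightarrow> ('a list \<times> 'b list) pmf) \<Rightarrow> nat \<Rightarrow> 'a list \<Rightarrow> 'b list \<Rightarrow> real" where
  "condXY P n x y = pmf (P n) (x, y) / pmf (map_pmf snd (P n)) y"

definition condYX :: "(nat \<Rightarrow> ('a list \<times> 'b list) pmf) \<Rightarrow> nat \<Rightarrow> 'b list \<Rightarrow> 'a list \<Rightarrow> real" where
  "condYX P n y x = pmf (P n) (x, y) / pmf (map_pmf fst (P n)) x"

definition info_density :: "(nat \<Rightarrow> ('a list \<times> 'b list) pmf) \<Rightarrow> nat \<Rightarrow> 'a list \<times> 'b list \<Rightarrow> real" where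
  "info_density P n xy = (1 / real n) * log 2 (1 / condXY P n (fst xy) (snd xy))"

definition uniformly_integrable_seq :: "(nat \<Rightarrow> real pmf) \<Rightarrow> bool" where
  "uniformly_integrable_seq Z \<longleftrightarrow>
     ((\<lambda>u::real. SUP n\<in>{1..}. \<integral>\<^sup>+ z. ennreal (pmf (Z n) z * \<bar>z\<bar>) \<partial>count_space {z. \<bar>z\<bar> \<ge> u})
        \<longlongrightarrow> 0) at_top"

definition uniformly_integrable_source :: "(nat \<Rightarrow> ('a list \<times> 'b list) pmf) \<Rightarrow> bool" where
  "uniformly_integrable_source P \<longleftrightarrow>
     uniformly_integrable_seq (\<lambda>n. map_pmf (info_density P n) (P n))"

definition hbar :: "(nat \<Rightarrow> ('a list \<times> 'b list) pmf) \<Rightarrow> nat \<Rightarrow> real \<Rightarrow> 'a list \<Rightarrow> real" where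
  "hbar P n \<epsilon> x = Inf {a::real.
      (\<integral>\<^sup>+ y. ennreal (condYX P n y x)
         \<partial>count_space {y. log 2 (1 / condXY P n x y) > a}) \<le> ennreal \<epsilon>}"

text \<open>\bar H_s^\<epsilon>(X^n|Y^n) = \<Sum>_x P_{X^n}(x) \bar h^\<epsilon>(x) (nonnegative for \<epsilon> < 1,
  which is all that matters for the limit \<epsilon> \<down> 0).\<close>
definition Hs_eps :: "(nat \<Rightarrow> ('a list \<times> 'b list) pmf) \<Rightarrow> nat \<Rightarrow> real \<Rightarrow> ereal" where
  "Hs_eps P n \<epsilon> = enn2ereal (\<integral>\<^sup>+ x. ennreal (pmf (map_pmf fst (P n)) x * hbar P n \<epsilon> x)
                                 \<partial>count_space {x. length x = n})"

definition Hs_bar :: "(nat \<Rightarrow> ('a list \<times> 'b list) pmf) \<Rightarrow> ereal" where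
  "Hs_bar P = Lim (at_right 0) (\<lambda>\<epsilon>::real. limsup (\<lambda>n. ereal (1 / real n) * Hs_eps P n \<epsilon>))"

definition prefix_free :: "bool list set \<Rightarrow> bool" where
  "prefix_free C \<longleftrightarrow> (\<forall>u\<in>C. \<forall>v\<in>C. \<not> strict_prefix u v)"

definition SW_code :: "nat \<Rightarrow> ('a list \<Rightarrow> bool list) \<Rightarrow> bool" where
  "SW_code n \<phi> \<longleftrightarrow> prefix_free (\<phi> ` {x. length x = n})"

definition SW_error :: "(nat \<Rightarrow> ('a list \<times> 'b list) pmf) \<Rightarrow> nat \<Rightarrow> ('a list \<Rightarrow> bool list)
    \<Rightarrow> (bool list \<Rightarrow> 'b list \<Rightarrow> 'a list) \<Rightarrow> real" where
  "SW_error P n \<phi> \<psi> = measure_pmf.prob (P n) {(x, y). \<psi> (\<phi> x) y \<noteq> x}"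

definition SW_exp_length :: "(nat \<Rightarrow> ('a list \<times> 'b list) pmf) \<Rightarrow> nat \<Rightarrow> ('a list \<Rightarrow> bool list) \<Rightarrow> ereal" where
  "SW_exp_length P n \<phi> = enn2ereal (\<integral>\<^sup>+ xy. ennreal (real (length (\<phi> (fst xy)))) \<partial>measure_pmf (P n))"

definition weakly_achievable :: "(nat \<Rightarrow> ('a list \<times> 'b list) pmf) \<Rightarrow> real \<Rightarrow> bool" where
  "weakly_achievable P R \<longleftrightarrow>
     (\<exists>\<phi> \<psi>. (\<forall>n. SW_code n (\<phi> n)) \<and>
            (\<lambda>n. SW_error P n (\<phi> n) (\<psi> n)) \<longlonglongrightarrow> 0 \<and>
            limsup (\<lambda>n. ereal (1 / real n) * SW_exp_length P n (\<phi> n)) \<le> ereal R)"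

definition R_SW :: "(nat \<Rightarrow> ('a list \<times> 'b list) pmf) \<Rightarrow> ereal" where
  "R_SW P = Inf (ereal ` {R. weakly_achievable P R})"

end

theory Submission
  imports Defs
begin

lemma nn_integral_pair_countable:
  fixes f :: "('a::countable \<times> 'b::countable) \<Rightarrow> ennreal"
  shows "(\<integral>\<^sup>+ z. f z \<partial>count_space UNIV) = (\<integral>\<^sup>+ x. \<integral>\<^sup>+ y. f (x, y) \<partial>count_space UNIV \<partial>count_space UNIV)"
proof -
  interpret sigma_finite_measure "count_space (UNIV::'b set)"
    by (rule sigma_finite_measure_count_space_countable) simp
  have eq: "count_space (UNIV::'a set) \<Otimes>\<^sub>M count_space (UNIV::'b set) = count_space (UNIV \<times> UNIV)"
    by (rule pair_measure_countable) auto
  have "(\<integral>\<^sup>+ x. \<integral>\<^sup>+ y. f (x, y) \<partial>count_space UNIV \<partial>count_space UNIV) =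
      integral\<^sup>N (count_space (UNIV::'a set) \<Otimes>\<^sub>M count_space (UNIV::'b set)) f"
    by (rule nn_integral_fst) (simp add: eq)
  then show ?thesis by (simp add: eq)
qed

lemma nn_integral_swap_countable:
  fixes f :: "'a::countable \<Rightarrow> 'b::countable \<Rightarrow> ennreal"
  shows "(\<integral>\<^sup>+ x. \<integral>\<^sup>+ y. f x y \<partial>count_space UNIV \<partial>count_space UNIV) =
         (\<integral>\<^sup>+ y. \<integral>\<^sup>+ x. f x y \<partial>count_space UNIV \<partial>count_space UNIV)"
  by (rule nn_integral_count_space_nn_integral) auto

lemma nn_integral_pmf_pair_split:
  fixes p :: "('a::countable \<times> 'b::countable) pmf"
  shows "(\<integral>\<^sup>+ z. g z \<partial>measure_pmf p) =
     (\<integral>\<^sup>+ x. \<integral>\<^sup>+ y. ennreal (pmf p (x, y)) * g (x, y) \<partial>count_space UNIV \<partial>count_space UNIV)"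
  by (simp add: nn_integral_measure_pmf nn_integral_pair_countable[of "\<lambda>z. ennreal (pmf p z) * g z"])

lemma pmf_fst_sum:
  fixes p :: "('a::countable \<times> 'b::countable) pmf"
  shows "ennreal (pmf (map_pmf fst p) x) = (\<integral>\<^sup>+ y. ennreal (pmf p (x, y)) \<partial>count_space UNIV)"
proof -
  have "ennreal (pmf (map_pmf fst p) x) = emeasure (measure_pmf p) (fst -` {x})"
    by (simp add: pmf_map measure_pmf.emeasure_eq_measure)
  also have "\<dots> = (\<integral>\<^sup>+ z. indicator (fst -` {x}) z \<partial>measure_pmf p)"
    by simp
  also have "\<dots> = (\<integral>\<^sup>+ x'. \<integral>\<^sup>+ y. ennreal (pmf p (x', y)) * indicator {x} x' \<partial>count_space UNIV \<partial>count_space UNIV)"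
    by (subst nn_integral_pmf_pair_split) (simp add: indicator_def)
  also have "\<dots> = (\<integral>\<^sup>+ x'. (\<integral>\<^sup>+ y. ennreal (pmf p (x', y)) \<partial>count_space UNIV) * indicator {x} x' \<partial>count_space UNIV)"
    by (simp add: nn_integral_multc)
  also have "\<dots> = (\<integral>\<^sup>+ y. ennreal (pmf p (x, y)) \<partial>count_space UNIV)"
    by simp
  finally show ?thesis .
qed

lemma pmf_snd_sum:
  fixes p :: "('a::countable \<times> 'b::countable) pmf"
  shows "ennreal (pmf (map_pmf snd p) y) = (\<integral>\<^sup>+ x. ennreal (pmf p (x, y)) \<partial>count_space UNIV)"
proof -
  have "ennreal (pmf (map_pmf snd p) y) = emeasure (measure_pmf p) (snd -` {y})"
    by (simp add: pmf_map measure_pmf.emeasure_eq_measure)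
  also have "\<dots> = (\<integral>\<^sup>+ z. indicator (snd -` {y}) z \<partial>measure_pmf p)"
    by simp
  also have "\<dots> = (\<integral>\<^sup>+ x. \<integral>\<^sup>+ y'. ennreal (pmf p (x, y')) * indicator {y} y' \<partial>count_space UNIV \<partial>count_space UNIV)"
    by (subst nn_integral_pmf_pair_split) (simp add: indicator_def)
  also have "\<dots> = (\<integral>\<^sup>+ x. ennreal (pmf p (x, y)) \<partial>count_space UNIV)"
    by simp
  finally show ?thesis .
qed

lemma pmf_le_fst: "pmf p (x, y) \<le> pmf (map_pmf fst p) x"
  by (simp add: pmf_map measure_pmf_single[symmetric] del: measure_pmf_single
      ; rule measure_pmf.finite_measure_mono; auto)

lemma pmf_le_snd: "pmf p (x, y) \<le> pmf (map_pmf snd p) y"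
  by (simp add: pmf_map measure_pmf_single[symmetric] del: measure_pmf_single
      ; rule measure_pmf.finite_measure_mono; auto)

lemma card_ext: "card {w::bool list. length w = N \<and> prefix c w} = (if length c \<le> N then 2 ^ (N - length c) else 0)"
proof (cases "length c \<le> N")
  case True
  have "{w::bool list. length w = N \<and> prefix c w} = (\<lambda>v. c @ v) ` {v. set v \<subseteq> UNIV \<and> length v = N - length c}"
    using True by (auto simp: prefix_def)
  moreover have "inj_on (\<lambda>v. c @ v) X" for X by (auto simp: inj_on_def)
  ultimately have "card {w::bool list. length w = N \<and> prefix c w} = card {v::bool list. set v \<subseteq> UNIV \<and> length v = N - length c}"
    by (simp add: card_image)
  also have "\<dots> = 2 ^ (N - length c)"
    by (subst card_lists_length_eq) auto
  finally show ?thesis using True by simp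
next
  case False
  have eq: "{w::bool list. length w = N \<and> prefix c w} = {}"
    using False prefix_length_le by fastforce
  show ?thesis using False by (simp only: eq card.empty) simp
qed

lemma kraft_finite:
  assumes pf: "prefix_free C" and fin: "finite C" and len: "\<And>c. c \<in> C \<Longrightarrow> length c \<le> N"
  shows "(\<Sum>c\<in>C. (1/2::real) ^ length c) \<le> 1"
proof -
  define E where "E c = {w::bool list. length w = N \<and> prefix c w}" for c
  have fE: "finite (E c)" for c
    unfolding E_def by (rule finite_subset[of _ "{w. length w = N}"])
      (use finite_lists_length_eq[of "UNIV::bool set" N] in auto)
  have disj: "E c \<inter> E c' = {}" if "c \<in> C" "c' \<in> C" "c \<noteq> c'" for c c'
  proof (rule ccontr)
    assume "E c \<inter> E c' \<noteq> {}"
    then obtain w where "prefix c w" "prefix c' w" unfolding E_def by auto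
    then have "prefix c c' \<or> prefix c' c" using prefix_same_cases by blast
    then show False using pf that unfolding prefix_free_def strict_prefix_def by blast
  qed
  have "(\<Sum>c\<in>C. real (card (E c))) = real (card (\<Union>c\<in>C. E c))"
    using card_UN_disjoint[OF fin, of E] fE disj by (simp add: of_nat_sum)
  also have "\<dots> \<le> real (card {w::bool list. set w \<subseteq> UNIV \<and> length w = N})"
    by (intro of_nat_mono card_mono finite_lists_length_eq) (auto simp: E_def)
  also have "\<dots> = 2 ^ N" by (subst card_lists_length_eq) auto
  finally have s: "(\<Sum>c\<in>C. real (card (E c))) \<le> 2 ^ N" .
  have "(\<Sum>c\<in>C. (1/2::real) ^ length c) = (\<Sum>c\<in>C. real (card (E c))) / 2 ^ N"
    unfolding sum_divide_distrib
  proof (rule sum.cong)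
    fix c assume "c \<in> C"
    then have l: "length c \<le> N" by (rule len)
    then have "real (card (E c)) = 2 ^ (N - length c)" by (simp add: E_def card_ext)
    moreover have "(2::real) ^ N = 2 ^ (N - length c) * 2 ^ length c"
      using l by (simp add: power_add[symmetric])
    ultimately show "(1/2::real) ^ length c = real (card (E c)) / 2 ^ N"
      by (simp add: power_one_over)
  qed simp
  also have "\<dots> \<le> 1" using s by simp
  finally show ?thesis .
qed

lemma kraft:
  assumes pf: "prefix_free C"
  shows "(\<integral>\<^sup>+ c. ennreal ((1/2) ^ length c) \<partial>count_space C) \<le> 1"
proof -
  define f where "f N c = ennreal ((1/2) ^ length c) * indicator {c. c \<in> C \<and> length c \<le> N} c" for N c
  have inc: "incseq f" unfolding f_def incseq_def le_fun_def
    by (auto intro!: mult_left_mono split: split_indicator)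
  have sup: "(SUP N. f N c) = ennreal ((1/2) ^ length c) * indicator C c" for c
  proof (cases "c \<in> C")
    case True
    have "(SUP N. f N c) = f (length c) c"
    proof (rule antisym)
      show "(SUP N. f N c) \<le> f (length c) c" 
        by (rule SUP_least) (auto simp: f_def split: split_indicator)
    qed (rule SUP_upper, simp)
    then show ?thesis using True by (simp add: f_def)
  qed (simp add: f_def)
  have "(\<integral>\<^sup>+ c. ennreal ((1/2) ^ length c) \<partial>count_space C) = (\<integral>\<^sup>+ c. (SUP N. f N c) \<partial>count_space UNIV)"
    by (simp add: sup nn_integral_count_space_indicator)
  also have "\<dots> = (SUP N. integral\<^sup>N (count_space UNIV) (f N))"
    by (rule nn_integral_monotone_convergence_SUP[OF inc]) simp
  also have "\<dots> \<le> 1"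
  proof (rule SUP_least)
    fix N
    define CN where "CN = {c. c \<in> C \<and> length c \<le> N}"
    have fin: "finite CN"
      by (rule finite_subset[of _ "{w::bool list. set w \<subseteq> UNIV \<and> length w \<le> N}"])
        (use finite_lists_length_le[of "UNIV::bool set" N] in \<open>auto simp: CN_def\<close>)
    have "integral\<^sup>N (count_space UNIV) (f N) = (\<integral>\<^sup>+ c. ennreal ((1/2) ^ length c) \<partial>count_space CN)"
    proof -
      have "(\<integral>\<^sup>+ c. ennreal ((1/2) ^ length c) \<partial>count_space CN) = (\<integral>\<^sup>+ c. ennreal ((1/2) ^ length c) * indicator CN c \<partial>count_space UNIV)"
        by (rule nn_integral_count_space_indicator) simp
      also have "\<dots> = integral\<^sup>N (count_space UNIV) (f N)"
        unfolding f_def CN_def by (rule refl)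
      finally show ?thesis by simp
    qed
    also have "\<dots> = (\<Sum>c\<in>CN. ennreal ((1/2) ^ length c))"
      by (rule nn_integral_count_space_finite[OF fin])
    also have "\<dots> = ennreal (\<Sum>c\<in>CN. (1/2) ^ length c)"
      by (rule sum_ennreal) simp
    also have "\<dots> \<le> 1"
    proof -
      have "prefix_free CN" using pf unfolding prefix_free_def CN_def by blast
      then have "(\<Sum>c\<in>CN. (1/2::real) ^ length c) \<le> 1"
        by (rule kraft_finite[OF _ fin, of N]) (simp add: CN_def)
      then show ?thesis by simp
    qed
    finally show "integral\<^sup>N (count_space UNIV) (f N) \<le> 1" .
  qed
  finally show ?thesis .
qed

abbreviation pX where "pX P n \<equiv> map_pmf fst (P n)"
abbreviation pY where "pY P n \<equiv> map_pmf snd (P n)"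

definition Wd :: "(nat \<Rightarrow> ('a list \<times> 'b list) pmf) \<Rightarrow> nat \<Rightarrow> 'a list \<Rightarrow> 'b list \<Rightarrow> real" where
  "Wd P n x y = log 2 (1 / condXY P n x y)"

lemma condXY_nonneg: "condXY P n x y \<ge> 0"
  by (simp add: condXY_def)
lemma condYX_nonneg: "condYX P n y x \<ge> 0"
  by (simp add: condYX_def)
lemma condXY_le1: "condXY P n x y \<le> 1"
  unfolding condXY_def using pmf_le_snd[of "P n" x y]
  by (cases "pmf (pY P n) y = 0") (auto simp: divide_le_eq_1)
lemma condYX_le1: "condYX P n y x \<le> 1"
  unfolding condYX_def using pmf_le_fst[of "P n" x y]
  by (cases "pmf (pX P n) x = 0") (auto simp: divide_le_eq_1)

lemma joint_eq_X: "pmf (P n) (x, y) = pmf (pX P n) x * condYX P n y x"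
  unfolding condYX_def using pmf_le_fst[of "P n" x y] pmf_nonneg[of "P n" "(x,y)"]
  by (cases "pmf (pX P n) x = 0") auto
lemma joint_eq_Y: "pmf (P n) (x, y) = pmf (pY P n) y * condXY P n x y"
  unfolding condXY_def using pmf_le_snd[of "P n" x y] pmf_nonneg[of "P n" "(x,y)"]
  by (cases "pmf (pY P n) y = 0") auto

lemma Wd_nonneg: "Wd P n x y \<ge> 0"
proof (cases "condXY P n x y = 0")
  case True then show ?thesis by (simp add: Wd_def log_def)
next
  case False
  then have "0 < condXY P n x y" using condXY_nonneg[of P n x y] by linarith
  then have "1 \<le> 1 / condXY P n x y" using condXY_le1[of P n x y] by (simp add: field_simps)
  moreover have "0 < 1 / condXY P n x y" using \<open>0 < condXY P n x y\<close> by simp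
  ultimately show ?thesis by (simp add: Wd_def)
qed

lemma Wd_gt_iff:
  assumes "condXY P n x y > 0"
  shows "Wd P n x y > a \<longleftrightarrow> condXY P n x y < 2 powr (- a)"
proof -
  have "Wd P n x y = - log 2 (condXY P n x y)"
    using assms by (simp add: Wd_def log_divide)
  then have "Wd P n x y > a \<longleftrightarrow> log 2 (condXY P n x y) < - a" by linarith
  also have "\<dots> \<longleftrightarrow> condXY P n x y < 2 powr (- a)"
    using assms by (simp add: log_less_iff)
  finally show ?thesis .
qed

lemma mulX:
  "ennreal (pmf (pX P n) x) * (\<integral>\<^sup>+ y. ennreal (condYX P n y x) * h y \<partial>count_space UNIV)
     = (\<integral>\<^sup>+ y. ennreal (pmf (P n) (x, y)) * h y \<partial>count_space UNIV)"
proof -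
  have "ennreal (pmf (pX P n) x) * (\<integral>\<^sup>+ y. ennreal (condYX P n y x) * h y \<partial>count_space UNIV)
   = (\<integral>\<^sup>+ y. ennreal (pmf (pX P n) x) * (ennreal (condYX P n y x) * h y) \<partial>count_space UNIV)"
    by (rule nn_integral_cmult[symmetric]) simp
  also have "\<dots> = (\<integral>\<^sup>+ y. ennreal (pmf (P n) (x, y)) * h y \<partial>count_space UNIV)"
    by (intro nn_integral_cong) (simp only: joint_eq_X[of P n x] ennreal_mult[OF pmf_nonneg condYX_nonneg] mult.assoc)
  finally show ?thesis .
qed

lemma mulY:
  "ennreal (pmf (pY P n) y) * (\<integral>\<^sup>+ x. ennreal (condXY P n x y) * h x \<partial>count_space UNIV)
     = (\<integral>\<^sup>+ x. ennreal (pmf (P n) (x, y)) * h x \<partial>count_space UNIV)"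
proof -
  have "ennreal (pmf (pY P n) y) * (\<integral>\<^sup>+ x. ennreal (condXY P n x y) * h x \<partial>count_space UNIV)
   = (\<integral>\<^sup>+ x. ennreal (pmf (pY P n) y) * (ennreal (condXY P n x y) * h x) \<partial>count_space UNIV)"
    by (rule nn_integral_cmult[symmetric]) simp
  also have "\<dots> = (\<integral>\<^sup>+ x. ennreal (pmf (P n) (x, y)) * h x \<partial>count_space UNIV)"
    by (intro nn_integral_cong) (simp only: joint_eq_Y[of P n _ y] ennreal_mult[OF pmf_nonneg condXY_nonneg] mult.assoc)
  finally show ?thesis .
qed

lemma K2X:
  fixes P :: "nat \<Rightarrow> ('a::countable list \<times> 'b::countable list) pmf"
  shows "(\<integral>\<^sup>+ z. g z \<partial>measure_pmf (P n)) =
    (\<integral>\<^sup>+ x. ennreal (pmf (pX P n) x) * (\<integral>\<^sup>+ y. ennreal (condYX P n y x) * g (x, y) \<partial>count_space UNIV) \<partial>count_space UNIV)"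
  unfolding nn_integral_pmf_pair_split by (intro nn_integral_cong) (rule mulX[symmetric])

lemma K2Y:
  fixes P :: "nat \<Rightarrow> ('a::countable list \<times> 'b::countable list) pmf"
  shows "(\<integral>\<^sup>+ z. g z \<partial>measure_pmf (P n)) =
    (\<integral>\<^sup>+ y. ennreal (pmf (pY P n) y) * (\<integral>\<^sup>+ x. ennreal (condXY P n x y) * g (x, y) \<partial>count_space UNIV) \<partial>count_space UNIV)"
  unfolding nn_integral_pmf_pair_split
  by (subst nn_integral_swap_countable) (intro nn_integral_cong, rule mulY[symmetric])

lemma sum_condXY:
  fixes P :: "nat \<Rightarrow> ('a::countable list \<times> 'b::countable list) pmf"
  shows "(\<integral>\<^sup>+ x. ennreal (condXY P n x y) \<partial>count_space UNIV) \<le> 1"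
proof (cases "pmf (pY P n) y = 0")
  case True
  then show ?thesis by (simp add: condXY_def)
next
  case False
  then have pos: "pmf (pY P n) y > 0" using pmf_nonneg[of "pY P n" y] by linarith
  have "ennreal (pmf (pY P n) y) * (\<integral>\<^sup>+ x. ennreal (condXY P n x y) \<partial>count_space UNIV) = ennreal (pmf (pY P n) y) * 1"
  proof -
    have "ennreal (pmf (pY P n) y) * (\<integral>\<^sup>+ x. ennreal (condXY P n x y) \<partial>count_space UNIV)
       = (\<integral>\<^sup>+ x. ennreal (pmf (P n) (x, y)) \<partial>count_space UNIV)"
      using mulY[of P n y "\<lambda>_. 1"] by (simp only: mult_1_right)
    also have "\<dots> = ennreal (pmf (pY P n) y) * 1" using pmf_snd_sum[of "P n" y] by (simp only: mult_1_right)
    finally show ?thesis .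
  qed
  then have "(\<integral>\<^sup>+ x. ennreal (condXY P n x y) \<partial>count_space UNIV) = 1"
    using pos by (subst (asm) ennreal_mult_cancel_left) auto
  then show ?thesis by simp
qed

lemma sum_condYX:
  fixes P :: "nat \<Rightarrow> ('a::countable list \<times> 'b::countable list) pmf"
  assumes pos: "pmf (pX P n) x > 0"
  shows "(\<integral>\<^sup>+ y. ennreal (condYX P n y x) \<partial>count_space UNIV) = 1"
proof -
  have "ennreal (pmf (pX P n) x) * (\<integral>\<^sup>+ y. ennreal (condYX P n y x) \<partial>count_space UNIV) = ennreal (pmf (pX P n) x) * 1"
  proof -
    have "ennreal (pmf (pX P n) x) * (\<integral>\<^sup>+ y. ennreal (condYX P n y x) \<partial>count_space UNIV)
       = (\<integral>\<^sup>+ y. ennreal (pmf (P n) (x, y)) \<partial>count_space UNIV)"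
      using mulX[of P n x "\<lambda>_. 1"] by (simp only: mult_1_right)
    also have "\<dots> = ennreal (pmf (pX P n) x) * 1" using pmf_fst_sum[of "P n" x] by (simp only: mult_1_right)
    finally show ?thesis .
  qed
  then show ?thesis
    using pos by (subst (asm) ennreal_mult_cancel_left) auto
qed

lemma gs_supp: "general_source P \<Longrightarrow> set_pmf (P n) \<subseteq> {(x, y). length x = n \<and> length y = n}"
  unfolding general_source_def by (elim conjE) (erule spec)
lemma gs_posX: "general_source P \<Longrightarrow> length x = n \<Longrightarrow> pmf (pX P n) x > 0"
  unfolding general_source_def by (elim conjE) (drule spec, drule spec, erule mp)
lemma gs_posY: "general_source P \<Longrightarrow> length y = n \<Longrightarrow> pmf (pY P n) y > 0"
  unfolding general_source_def by (elim conjE) (drule spec, drule spec, erule mp)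

lemma supp_len:
  assumes "general_source P" "pmf (P n) (x, y) > 0"
  shows "length x = n" "length y = n"
proof -
  have "(x, y) \<in> set_pmf (P n)" using assms(2) by (simp add: set_pmf_eq')
  then have "(x, y) \<in> {(x, y). length x = n \<and> length y = n}" using gs_supp[OF assms(1)] by (rule subsetD[rotated])
  then show "length x = n" "length y = n" by simp_all
qed

lemma pX_len:
  assumes "general_source P" "pmf (pX P n) x > 0"
  shows "length x = n"
proof -
  have "x \<in> set_pmf (pX P n)" using assms(2) by (simp add: set_pmf_eq')
  then obtain y where "(x, y) \<in> set_pmf (P n)" by auto
  then have "(x, y) \<in> {(x, y). length x = n \<and> length y = n}" using gs_supp[OF assms(1)] by (rule subsetD[rotated])
  then show ?thesis by simp
qed

definition Tq :: "(nat \<Rightarrow> ('a list \<times> 'b list) pmf) \<Rightarrow> nat \<Rightarrow> 'a list \<Rightarrow> real \<Rightarrow> ennreal" where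
  "Tq P n x a = (\<integral>\<^sup>+ y. ennreal (condYX P n y x) \<partial>count_space {y. log 2 (1 / condXY P n x y) > a})"

definition ExW :: "(nat \<Rightarrow> ('a list \<times> 'b list) pmf) \<Rightarrow> nat \<Rightarrow> 'a list \<Rightarrow> ennreal" where
  "ExW P n x = (\<integral>\<^sup>+ y. ennreal (condYX P n y x) * ennreal (Wd P n x y) \<partial>count_space UNIV)"

lemma hbar_Tq: "hbar P n \<epsilon> x = Inf {a. Tq P n x a \<le> ennreal \<epsilon>}"
  unfolding hbar_def Tq_def ..

lemma Tq_ind: "Tq P n x a = (\<integral>\<^sup>+ y. ennreal (condYX P n y x) * indicator {y. Wd P n x y > a} y \<partial>count_space UNIV)"
  unfolding Tq_def Wd_def by (rule nn_integral_count_space_indicator) simp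

context
  fixes P :: "nat \<Rightarrow> ('a::countable list \<times> 'b::countable list) pmf" and n x
  assumes px: "pmf (pX P n) x > 0"
begin

lemma Tq_le1: "Tq P n x a \<le> 1"
proof -
  have "Tq P n x a \<le> (\<integral>\<^sup>+ y. ennreal (condYX P n y x) \<partial>count_space UNIV)"
    unfolding Tq_ind by (intro nn_integral_mono) (simp add: mult_left_le split: split_indicator)
  also have "\<dots> = 1" by (rule sum_condYX[of P n x, OF px])
  finally show ?thesis .
qed

lemma Tq_neg: "a < 0 \<Longrightarrow> Tq P n x a = 1"
proof -
  assume "a < 0"
  then have "\<And>y. indicator {y. Wd P n x y > a} y = (1::ennreal)"
    using Wd_nonneg[of P n x] by (simp add: indicator_def) (meson le_less_trans not_less)
  then show ?thesis unfolding Tq_ind using sum_condYX[of P n x, OF px] by simp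
qed

lemma Tq_mono: "a \<le> b \<Longrightarrow> Tq P n x b \<le> Tq P n x a"
  unfolding Tq_ind by (intro nn_integral_mono mult_left_mono) (auto split: split_indicator)

lemma Tq_markov:
  assumes "0 < a"
  shows "Tq P n x a * ennreal a \<le> ExW P n x"
proof -
  have "Tq P n x a * ennreal a = (\<integral>\<^sup>+ y. ennreal (condYX P n y x) * indicator {y. Wd P n x y > a} y * ennreal a \<partial>count_space UNIV)"
    unfolding Tq_ind by (rule nn_integral_multc[symmetric]) simp
  also have "\<dots> \<le> ExW P n x"
    unfolding ExW_def
  proof (intro nn_integral_mono)
    fix y
    show "ennreal (condYX P n y x) * indicator {y. Wd P n x y > a} y * ennreal a \<le> ennreal (condYX P n y x) * ennreal (Wd P n x y)"
      by (cases "Wd P n x y > a") (auto intro!: mult_left_mono ennreal_leI)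
  qed
  finally show ?thesis .
qed

lemma Tq_real: "Tq P n x a = ennreal (enn2real (Tq P n x a))"
  using Tq_le1[of a] by (simp add: ennreal_enn2real_if top_unique) (metis ennreal_one_neq_top top.extremum_uniqueI)

context
  fixes \<epsilon> :: real
  assumes eps: "0 < \<epsilon>" "\<epsilon> < 1"
begin

lemma S_lower: "a \<in> {a. Tq P n x a \<le> ennreal \<epsilon>} \<Longrightarrow> 0 \<le> a"
proof (rule ccontr)
  assume a: "a \<in> {a. Tq P n x a \<le> ennreal \<epsilon>}" "\<not> 0 \<le> a"
  then have "Tq P n x a = 1" by (intro Tq_neg) simp
  with a eps show False by simp
qed

lemma S_bdd: "bdd_below {a. Tq P n x a \<le> ennreal \<epsilon>}"
  using S_lower by (intro bdd_belowI) 

lemma hbar_le: "Tq P n x b \<le> ennreal \<epsilon> \<Longrightarrow> hbar P n \<epsilon> x \<le> b"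
  unfolding hbar_Tq by (rule cInf_lower[OF _ S_bdd]) simp

lemma hbar_nonneg: "{a. Tq P n x a \<le> ennreal \<epsilon>} \<noteq> {} \<Longrightarrow> 0 \<le> hbar P n \<epsilon> x"
  unfolding hbar_Tq by (rule cInf_greatest) (auto intro: S_lower)

lemma hbar_gt: "{a. Tq P n x a \<le> ennreal \<epsilon>} \<noteq> {} \<Longrightarrow> hbar P n \<epsilon> x < b \<Longrightarrow> Tq P n x b \<le> ennreal \<epsilon>"
proof -
  assume ne: "{a. Tq P n x a \<le> ennreal \<epsilon>} \<noteq> {}" and lt: "hbar P n \<epsilon> x < b"
  then obtain s where s: "Tq P n x s \<le> ennreal \<epsilon>" "s < b"
    unfolding hbar_Tq cInf_less_iff[OF ne S_bdd] by auto
  then show ?thesis using Tq_mono[of s b] by simp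
qed

lemma markov_in_S:
  assumes fin: "ExW P n x < \<infinity>" and b: "enn2real (ExW P n x) / \<epsilon> < b"
  shows "Tq P n x b \<le> ennreal \<epsilon>"
proof -
  define e where "e = enn2real (ExW P n x)"
  have e0: "0 \<le> e" by (simp add: e_def)
  have Ee: "ExW P n x = ennreal e" using fin by (simp add: e_def less_top ennreal_enn2real_if)
  have b0: "0 < b" using b e0 eps unfolding e_def[symmetric] by (meson divide_nonneg_pos le_less_trans)
  define t where "t = enn2real (Tq P n x b)"
  have t0: "0 \<le> t" by (simp add: t_def)
  have "ennreal (t * b) \<le> ennreal e"
    using Tq_markov[OF b0] Tq_real[of b] b0 t0 by (simp add: t_def Ee ennreal_mult)
  then have "t * b \<le> e" using e0 by (simp add: ennreal_le_iff)
  then have "t \<le> e / b" using b0 by (simp add: field_simps)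
  also have "e / b < \<epsilon>" using b b0 eps unfolding e_def[symmetric] by (simp add: field_simps)
  finally have "t \<le> \<epsilon>" by simp
  then have "ennreal t \<le> ennreal \<epsilon>" by (rule ennreal_leI)
  then show ?thesis using Tq_real[of b] by (simp add: t_def)
qed

lemma S_nonempty: "ExW P n x < \<infinity> \<Longrightarrow> {a. Tq P n x a \<le> ennreal \<epsilon>} \<noteq> {}"
  using markov_in_S[of "enn2real (ExW P n x) / \<epsilon> + 1"] by auto

lemma hbar_markov: "ExW P n x < \<infinity> \<Longrightarrow> hbar P n \<epsilon> x \<le> enn2real (ExW P n x) / \<epsilon>"
  by (rule dense_ge) (rule hbar_le, erule markov_in_S)

end

lemma hbar_mono:
  assumes "0 < \<epsilon>1" "\<epsilon>1 \<le> \<epsilon>2" "\<epsilon>2 < 1" "ExW P n x < \<infinity>"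
  shows "hbar P n \<epsilon>2 x \<le> hbar P n \<epsilon>1 x"
proof -
  have e1: "\<epsilon>1 < 1" "0 < \<epsilon>2" using assms by auto
  show ?thesis
    unfolding hbar_Tq[of P n \<epsilon>1]
  proof (rule cInf_greatest)
    show "{a. Tq P n x a \<le> ennreal \<epsilon>1} \<noteq> {}" using S_nonempty[OF assms(1) e1(1) assms(4)] .
    fix a assume "a \<in> {a. Tq P n x a \<le> ennreal \<epsilon>1}"
    then have "Tq P n x a \<le> ennreal \<epsilon>2" using assms(2) by (auto intro: order_trans ennreal_leI)
    then show "hbar P n \<epsilon>2 x \<le> a" by (rule hbar_le[OF e1(2) assms(3)])
  qed
qed

end

definition TS :: "(nat \<Rightarrow> ('a list \<times> 'b list) pmf) \<Rightarrow> real \<Rightarrow> ennreal" where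
  "TS P u = (SUP n\<in>{1..}. \<integral>\<^sup>+ z. ennreal (pmf (map_pmf (info_density P n) (P n)) z * \<bar>z\<bar>) \<partial>count_space {z. \<bar>z\<bar> \<ge> u})"

lemma info_density_eq: "info_density P n (x, y) = Wd P n x y / real n"
  by (simp add: info_density_def Wd_def)

lemma info_density_nonneg: "info_density P n z \<ge> 0"
  by (cases z) (simp add: info_density_eq Wd_nonneg)

lemma tail_eq:
  "(\<integral>\<^sup>+ z. ennreal (pmf (map_pmf (info_density P n) (P n)) z * \<bar>z\<bar>) \<partial>count_space {z. \<bar>z\<bar> \<ge> u})
   = (\<integral>\<^sup>+ xy. ennreal (info_density P n xy) * indicator {xy. info_density P n xy \<ge> u} xy \<partial>measure_pmf (P n))"
proof -
  have "(\<integral>\<^sup>+ z. ennreal (pmf (map_pmf (info_density P n) (P n)) z * \<bar>z\<bar>) \<partial>count_space {z. \<bar>z\<bar> \<ge> u})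
     = (\<integral>\<^sup>+ z. ennreal (pmf (map_pmf (info_density P n) (P n)) z * \<bar>z\<bar>) * indicator {z. \<bar>z\<bar> \<ge> u} z \<partial>count_space UNIV)"
    by (rule nn_integral_count_space_indicator) simp
  also have "\<dots> = (\<integral>\<^sup>+ z. ennreal (pmf (map_pmf (info_density P n) (P n)) z) * (ennreal \<bar>z\<bar> * indicator {z. \<bar>z\<bar> \<ge> u} z) \<partial>count_space UNIV)"
    by (intro nn_integral_cong) (simp add: ennreal_mult mult.assoc)
  also have "\<dots> = (\<integral>\<^sup>+ z. ennreal \<bar>z\<bar> * indicator {z. \<bar>z\<bar> \<ge> u} z \<partial>measure_pmf (map_pmf (info_density P n) (P n)))"
    by (rule nn_integral_measure_pmf[symmetric])
  also have "\<dots> = (\<integral>\<^sup>+ xy. ennreal \<bar>info_density P n xy\<bar> * indicator {z. \<bar>z\<bar> \<ge> u} (info_density P n xy) \<partial>measure_pmf (P n))"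
    by simp
  also have "\<dots> = (\<integral>\<^sup>+ xy. ennreal (info_density P n xy) * indicator {xy. info_density P n xy \<ge> u} xy \<partial>measure_pmf (P n))"
    by (intro nn_integral_cong) (simp add: info_density_nonneg indicator_def)
  finally show ?thesis .
qed

lemma UI_bound:
  assumes n: "1 \<le> n"
  shows "(\<integral>\<^sup>+ xy. ennreal (info_density P n xy) * indicator A xy \<partial>measure_pmf (P n))
        \<le> ennreal u * emeasure (measure_pmf (P n)) A + TS P u"
proof -
  have "(\<integral>\<^sup>+ xy. ennreal (info_density P n xy) * indicator A xy \<partial>measure_pmf (P n))
     \<le> (\<integral>\<^sup>+ xy. ennreal u * indicator A xy + ennreal (info_density P n xy) * indicator {xy. info_density P n xy \<ge> u} xy \<partial>measure_pmf (P n))"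
  proof (intro nn_integral_mono)
    fix xy
    show "ennreal (info_density P n xy) * indicator A xy \<le> ennreal u * indicator A xy + ennreal (info_density P n xy) * indicator {xy. info_density P n xy \<ge> u} xy"
      by (cases "info_density P n xy \<ge> u"; cases "xy \<in> A") (auto intro: ennreal_leI add_increasing)
  qed
  also have "\<dots> = ennreal u * emeasure (measure_pmf (P n)) A +
       (\<integral>\<^sup>+ xy. ennreal (info_density P n xy) * indicator {xy. info_density P n xy \<ge> u} xy \<partial>measure_pmf (P n))"
    by (subst nn_integral_add) (simp_all add: nn_integral_cmult)
  also have "(\<integral>\<^sup>+ xy. ennreal (info_density P n xy) * indicator {xy. info_density P n xy \<ge> u} xy \<partial>measure_pmf (P n)) \<le> TS P u"
    unfolding TS_def tail_eq[symmetric] using n by (intro SUP_upper) simp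
  finally show ?thesis by (simp add: add_left_mono)
qed

lemma UI_TS: "uniformly_integrable_source P \<Longrightarrow> (TS P \<longlongrightarrow> 0) at_top"
  unfolding uniformly_integrable_source_def uniformly_integrable_seq_def TS_def .

lemma UI_exists:
  assumes "uniformly_integrable_source P" "0 < d"
  shows "\<exists>U. \<forall>u\<ge>U. TS P u < d"
proof -
  have "eventually (\<lambda>u. TS P u < d) at_top"
    using order_tendstoD(2)[OF UI_TS[OF assms(1)]] assms(2) by simp
  then show ?thesis by (simp add: eventually_at_top_linorder)
qed

lemma W_integral:
  assumes n: "1 \<le> n"
  shows "(\<integral>\<^sup>+ xy. ennreal (Wd P n (fst xy) (snd xy)) * indicator A xy \<partial>measure_pmf (P n))
     = ennreal (real n) * (\<integral>\<^sup>+ xy. ennreal (info_density P n xy) * indicator A xy \<partial>measure_pmf (P n))"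
proof -
  have "(\<integral>\<^sup>+ xy. ennreal (Wd P n (fst xy) (snd xy)) * indicator A xy \<partial>measure_pmf (P n))
     = (\<integral>\<^sup>+ xy. ennreal (real n) * (ennreal (info_density P n xy) * indicator A xy) \<partial>measure_pmf (P n))"
  proof (intro nn_integral_cong)
    fix xy :: "'a list \<times> 'b list"
    obtain x y where xy: "xy = (x, y)" by (cases xy)
    have "Wd P n x y = real n * info_density P n (x, y)" using n by (simp add: info_density_eq)
    then show "ennreal (Wd P n (fst xy) (snd xy)) * indicator A xy = ennreal (real n) * (ennreal (info_density P n xy) * indicator A xy)"
      by (simp add: xy ennreal_mult info_density_nonneg mult.assoc)
  qed
  also have "\<dots> = ennreal (real n) * (\<integral>\<^sup>+ xy. ennreal (info_density P n xy) * indicator A xy \<partial>measure_pmf (P n))"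
    by (rule nn_integral_cmult) simp
  finally show ?thesis .
qed

lemma W_finite:
  fixes P :: "nat \<Rightarrow> ('a::countable list \<times> 'b::countable list) pmf"
  assumes ui: "uniformly_integrable_source P" and n: "1 \<le> n"
  shows "(\<integral>\<^sup>+ xy. ennreal (Wd P n (fst xy) (snd xy)) \<partial>measure_pmf (P n)) < \<infinity>"
proof -
  obtain U where U: "\<forall>u\<ge>U. TS P u < 1" using UI_exists[OF ui, of 1] by auto
  then have TSU: "TS P U < 1" by simp
  have "(\<integral>\<^sup>+ xy. ennreal (Wd P n (fst xy) (snd xy)) \<partial>measure_pmf (P n))
     = (\<integral>\<^sup>+ xy. ennreal (Wd P n (fst xy) (snd xy)) * indicator UNIV xy \<partial>measure_pmf (P n))" by simp
  also have "\<dots> = ennreal (real n) * (\<integral>\<^sup>+ xy. ennreal (info_density P n xy) * indicator UNIV xy \<partial>measure_pmf (P n))"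
    by (rule W_integral[OF n])
  also have "\<dots> \<le> ennreal (real n) * (ennreal U * emeasure (measure_pmf (P n)) UNIV + TS P U)"
    by (intro mult_left_mono UI_bound[OF n]) simp
  also have "\<dots> < \<infinity>"
  proof -
    have t: "TS P U < \<infinity>" by (metis TSU ennreal_one_less_top infinity_ennreal_def order.strict_trans)
    have "ennreal U * emeasure (measure_pmf (P n)) UNIV + TS P U < \<infinity>"
    proof -
      have e1: "emeasure (measure_pmf (P n)) UNIV = 1" by simp
      show ?thesis unfolding e1
        by (metis ennreal_add_eq_top ennreal_neq_top infinity_ennreal_def less_top mult_1_right t)
    qed
    then show ?thesis by (simp add: ennreal_mult_less_top less_top)
  qed
  finally show ?thesis .
qed

lemma Ex_finite:
  fixes P :: "nat \<Rightarrow> ('a::countable list \<times> 'b::countable list) pmf"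
  assumes ui: "uniformly_integrable_source P" and n: "1 \<le> n" and px: "pmf (pX P n) x > 0"
  shows "ExW P n x < \<infinity>"
proof -
  have "ennreal (pmf (pX P n) x) * ExW P n x \<le>
    (\<integral>\<^sup>+ x. ennreal (pmf (pX P n) x) * (\<integral>\<^sup>+ y. ennreal (condYX P n y x) * ennreal (Wd P n x y) \<partial>count_space UNIV) \<partial>count_space UNIV)"
    unfolding ExW_def by (rule nn_integral_ge_point[of x UNIV "\<lambda>x. ennreal (pmf (pX P n) x) * (\<integral>\<^sup>+ y. ennreal (condYX P n y x) * ennreal (Wd P n x y) \<partial>count_space UNIV)"]) simp
  also have "\<dots> = (\<integral>\<^sup>+ xy. ennreal (Wd P n (fst xy) (snd xy)) \<partial>measure_pmf (P n))"
    by (subst K2X) simp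
  also have "\<dots> < \<infinity>" by (rule W_finite[OF ui n])
  finally have "ennreal (pmf (pX P n) x) * ExW P n x < \<infinity>" .
  then show ?thesis using px by (auto simp: ennreal_mult_less_top top.not_eq_extremum)
qed

lemma count_space_mono_int:
  "A \<subseteq> B \<Longrightarrow> (\<integral>\<^sup>+ x. f x \<partial>count_space A) \<le> (\<integral>\<^sup>+ x. f x \<partial>count_space B)"
  by (subst (1 2) nn_integral_count_space_indicator[where 'a='a])
     (auto intro!: nn_integral_mono split: split_indicator simp: NO_MATCH_def)

lemma condXY_pos_supp:
  assumes "condXY P n x y > 0"
  shows "pmf (P n) (x, y) > 0"
  using assms pmf_nonneg[of "P n" "(x,y)"] unfolding condXY_def
  by (cases "pmf (P n) (x, y) = 0") auto

lemma kraft_correct: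
  fixes \<phi> :: "'a list \<Rightarrow> bool list" and \<psi> :: "bool list \<Rightarrow> 'b \<Rightarrow> 'a list"
  assumes code: "SW_code n \<phi>"
  shows "(\<integral>\<^sup>+ x. ennreal ((1/2) ^ length (\<phi> x)) \<partial>count_space {x. length x = n \<and> \<psi> (\<phi> x) y = x}) \<le> 1"
proof -
  let ?C = "{x::'a list. length x = n \<and> \<psi> (\<phi> x) y = x}"
  have inj: "inj_on \<phi> ?C"
  proof (rule inj_onI)
    fix x x' assume "x \<in> ?C" "x' \<in> ?C" "\<phi> x = \<phi> x'"
    then have "x = \<psi> (\<phi> x) y" "x' = \<psi> (\<phi> x') y" by auto
    then show "x = x'" using \<open>\<phi> x = \<phi> x'\<close> by simp
  qed
  have "(\<integral>\<^sup>+ x. ennreal ((1/2) ^ length (\<phi> x)) \<partial>count_space ?C) = (\<integral>\<^sup>+ c. ennreal ((1/2) ^ length c) \<partial>count_space (\<phi> ` ?C))"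
    by (rule nn_integral_bij_count_space[OF inj_on_imp_bij_betw[OF inj], where f="\<lambda>c. ennreal ((1/2) ^ length c)"])
  also have "\<dots> \<le> (\<integral>\<^sup>+ c. ennreal ((1/2) ^ length c) \<partial>count_space (\<phi> ` {x. length x = n}))"
    by (rule count_space_mono_int) auto
  also have "\<dots> \<le> 1" by (rule kraft) (use code in \<open>simp add: SW_code_def\<close>)
  finally show ?thesis .
qed

lemma B_bound:
  fixes P :: "nat \<Rightarrow> ('a::countable list \<times> 'b::countable list) pmf"
  assumes gs: "general_source P" and code: "SW_code n \<phi>" and c0: "0 \<le> c"
  shows "emeasure (measure_pmf (P n)) {(x, y). Wd P n x y > real (length (\<phi> x)) + c}
     \<le> ennreal (SW_error P n \<phi> \<psi>) + ennreal (2 powr (- c))"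
proof -
  define B where "B = {(x, y). Wd P n x y > real (length (\<phi> x)) + c}"
  define Cor where "Cor = {(x, y). \<psi> (\<phi> x) y = x}"
  have "B \<subseteq> (B \<inter> Cor) \<union> {(x, y). \<psi> (\<phi> x) y \<noteq> x}" by (auto simp: Cor_def)
  then have "emeasure (measure_pmf (P n)) B \<le> emeasure (measure_pmf (P n)) ((B \<inter> Cor) \<union> {(x, y). \<psi> (\<phi> x) y \<noteq> x})"
    by (rule emeasure_mono) simp
  also have "\<dots> \<le> emeasure (measure_pmf (P n)) (B \<inter> Cor) + emeasure (measure_pmf (P n)) {(x, y). \<psi> (\<phi> x) y \<noteq> x}"
    by (rule emeasure_subadditive) simp_all
  also have "emeasure (measure_pmf (P n)) {(x, y). \<psi> (\<phi> x) y \<noteq> x} = ennreal (SW_error P n \<phi> \<psi>)"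
    by (simp add: SW_error_def measure_pmf.emeasure_eq_measure)
  also have "emeasure (measure_pmf (P n)) (B \<inter> Cor) \<le> ennreal (2 powr (- c))"
  proof -
    have "emeasure (measure_pmf (P n)) (B \<inter> Cor) = (\<integral>\<^sup>+ z. indicator (B \<inter> Cor) z \<partial>measure_pmf (P n))" by simp
    also have "\<dots> = (\<integral>\<^sup>+ y. ennreal (pmf (pY P n) y) * (\<integral>\<^sup>+ x. ennreal (condXY P n x y) * indicator (B \<inter> Cor) (x, y) \<partial>count_space UNIV) \<partial>count_space UNIV)"
      by (rule K2Y)
    also have "\<dots> \<le> (\<integral>\<^sup>+ y. ennreal (pmf (pY P n) y) * ennreal (2 powr (- c)) \<partial>count_space UNIV)"
    proof (intro nn_integral_mono mult_left_mono)
      fix y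
      have "(\<integral>\<^sup>+ x. ennreal (condXY P n x y) * indicator (B \<inter> Cor) (x, y) \<partial>count_space UNIV)
          \<le> (\<integral>\<^sup>+ x. ennreal (2 powr (- c)) * (ennreal ((1/2) ^ length (\<phi> x)) * indicator {x. length x = n \<and> \<psi> (\<phi> x) y = x} x) \<partial>count_space UNIV)"
      proof (intro nn_integral_mono)
        fix x
        show "ennreal (condXY P n x y) * indicator (B \<inter> Cor) (x, y) \<le> ennreal (2 powr (- c)) * (ennreal ((1/2) ^ length (\<phi> x)) * indicator {x. length x = n \<and> \<psi> (\<phi> x) y = x} x)"
        proof (cases "(x, y) \<in> B \<inter> Cor \<and> condXY P n x y > 0")
          case True
          then have pos: "condXY P n x y > 0" and inBC: "(x, y) \<in> B \<inter> Cor" by blast+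
          from inBC have inB: "Wd P n x y > real (length (\<phi> x)) + c" unfolding B_def by blast
          from inBC have cor: "\<psi> (\<phi> x) y = x" unfolding Cor_def by blast
          have len: "length x = n" using supp_len(1)[OF gs condXY_pos_supp[OF pos]] .
          have lt: "condXY P n x y < 2 powr (- (real (length (\<phi> x)) + c))"
            using inB Wd_gt_iff[OF pos] by blast
          have pw: "(2::real) powr (- (real (length (\<phi> x)) + c)) = 2 powr (- c) * (1/2) ^ length (\<phi> x)"
          proof -
            have "(2::real) powr (- (real (length (\<phi> x)) + c)) = 2 powr (- c) * 2 powr (- real (length (\<phi> x)))"
              by (subst powr_add[symmetric]) (rule arg_cong[where f="\<lambda>t. 2 powr t"], simp)
            also have "(2::real) powr (- real (length (\<phi> x))) = inverse (2 ^ length (\<phi> x))"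
              by (simp add: powr_minus powr_realpow)
            also have "\<dots> = (1/2) ^ length (\<phi> x)" by (simp add: power_one_over inverse_eq_divide)
            finally show ?thesis .
          qed
          have "ennreal (condXY P n x y) \<le> ennreal (2 powr (- c) * (1/2) ^ length (\<phi> x))"
            using lt unfolding pw by (intro ennreal_leI) simp
          also have "\<dots> = ennreal (2 powr (- c)) * ennreal ((1/2) ^ length (\<phi> x))"
            by (rule ennreal_mult) simp_all
          finally have le: "ennreal (condXY P n x y) \<le> ennreal (2 powr (- c)) * ennreal ((1/2) ^ length (\<phi> x))" .
          have i1: "indicator (B \<inter> Cor) (x, y) = (1::ennreal)" using inBC by (simp only: indicator_simps)
          have i2: "indicator {x. length x = n \<and> \<psi> (\<phi> x) y = x} x = (1::ennreal)"
            using len cor by (intro indicator_simps(1)) simp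
          show ?thesis unfolding i1 i2 using le by (simp only: mult_1_right)
        next
          case False
          then have "condXY P n x y = 0 \<or> (x, y) \<notin> B \<inter> Cor" using condXY_nonneg[of P n x y] by linarith
          then show ?thesis
          proof
            assume "condXY P n x y = 0" then show ?thesis by simp
          next
            assume "(x, y) \<notin> B \<inter> Cor"
            then have "indicator (B \<inter> Cor) (x, y) = (0::ennreal)" by (rule indicator_simps(2))
            then show ?thesis by simp
          qed
        qed
      qed
      also have "\<dots> = ennreal (2 powr (- c)) * (\<integral>\<^sup>+ x. ennreal ((1/2) ^ length (\<phi> x)) * indicator {x. length x = n \<and> \<psi> (\<phi> x) y = x} x \<partial>count_space UNIV)"
        by (rule nn_integral_cmult) simp
      also have "(\<integral>\<^sup>+ x. ennreal ((1/2) ^ length (\<phi> x)) * indicator {x. length x = n \<and> \<psi> (\<phi> x) y = x} x \<partial>count_space UNIV)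
         = (\<integral>\<^sup>+ x. ennreal ((1/2) ^ length (\<phi> x)) \<partial>count_space {x. length x = n \<and> \<psi> (\<phi> x) y = x})"
        by (rule nn_integral_count_space_indicator[symmetric]) simp
      also have "ennreal (2 powr (- c)) * \<dots> \<le> ennreal (2 powr (- c)) * 1"
        by (intro mult_left_mono kraft_correct[OF code]) simp
      finally show "(\<integral>\<^sup>+ x. ennreal (condXY P n x y) * indicator (B \<inter> Cor) (x, y) \<partial>count_space UNIV) \<le> ennreal (2 powr (- c))"
        by simp
    qed simp
    also have "\<dots> = (\<integral>\<^sup>+ y. ennreal (pmf (pY P n) y) \<partial>count_space UNIV) * ennreal (2 powr (- c))"
      by (rule nn_integral_multc) simp
    also have "(\<integral>\<^sup>+ y. ennreal (pmf (pY P n) y) \<partial>count_space UNIV) = 1"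
      by (simp add: nn_integral_pmf)
    finally show ?thesis by simp
  qed
  finally show ?thesis unfolding B_def by (simp add: add.commute)
qed

lemma emeasure_pX_sum: "emeasure (measure_pmf (pX P n)) A = (\<integral>\<^sup>+ x. ennreal (pmf (pX P n) x) * indicator A x \<partial>count_space UNIV)"
  by (subst nn_integral_indicator[symmetric]) (simp_all add: nn_integral_measure_pmf)

lemma Lexp_sum:
  "(\<integral>\<^sup>+ xy. ennreal (real (length (\<phi> (fst xy)))) \<partial>measure_pmf (P n))
    = (\<integral>\<^sup>+ x. ennreal (pmf (pX P n) x) * ennreal (real (length (\<phi> x))) \<partial>count_space UNIV)"
proof -
  have "(\<integral>\<^sup>+ xy. ennreal (real (length (\<phi> (fst xy)))) \<partial>measure_pmf (P n))
       = (\<integral>\<^sup>+ x. ennreal (real (length (\<phi> x))) \<partial>measure_pmf (pX P n))"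
    by (rule nn_integral_map_pmf[symmetric])
  also have "\<dots> = (\<integral>\<^sup>+ x. ennreal (pmf (pX P n) x) * ennreal (real (length (\<phi> x))) \<partial>count_space UNIV)"
    by (rule nn_integral_measure_pmf)
  finally show ?thesis .
qed

lemma bad_measure:
  fixes P :: "nat \<Rightarrow> ('a::countable list \<times> 'b::countable list) pmf"
  assumes gs: "general_source P" and code: "SW_code n \<phi>" and c0: "0 \<le> c" and eps: "0 < \<epsilon>"
  shows "emeasure (measure_pmf (pX P n)) {x. Tq P n x (real (length (\<phi> x)) + c) > ennreal \<epsilon>}
     \<le> ennreal ((SW_error P n \<phi> \<psi> + 2 powr (- c)) / \<epsilon>)"
proof -
  define bad where "bad = {x. Tq P n x (real (length (\<phi> x)) + c) > ennreal \<epsilon>}"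
  define B where "B = {(x, y). Wd P n x y > real (length (\<phi> x)) + c}"
  have "ennreal \<epsilon> * emeasure (measure_pmf (pX P n)) bad
      = (\<integral>\<^sup>+ x. ennreal \<epsilon> * (ennreal (pmf (pX P n) x) * indicator bad x) \<partial>count_space UNIV)"
    unfolding emeasure_pX_sum by (rule nn_integral_cmult[symmetric]) simp
  also have "\<dots> \<le> (\<integral>\<^sup>+ x. ennreal (pmf (pX P n) x) * Tq P n x (real (length (\<phi> x)) + c) \<partial>count_space UNIV)"
  proof (intro nn_integral_mono)
    fix x
    show "ennreal \<epsilon> * (ennreal (pmf (pX P n) x) * indicator bad x) \<le> ennreal (pmf (pX P n) x) * Tq P n x (real (length (\<phi> x)) + c)"
    proof (cases "x \<in> bad")
      case True
      then have "ennreal \<epsilon> \<le> Tq P n x (real (length (\<phi> x)) + c)" unfolding bad_def by simp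
      then have "ennreal (pmf (pX P n) x) * ennreal \<epsilon> \<le> ennreal (pmf (pX P n) x) * Tq P n x (real (length (\<phi> x)) + c)"
        by (rule mult_left_mono) simp
      then show ?thesis using True by (simp add: mult.commute)
    next
      case False then show ?thesis by simp
    qed
  qed
  also have "\<dots> = (\<integral>\<^sup>+ x. ennreal (pmf (pX P n) x) * (\<integral>\<^sup>+ y. ennreal (condYX P n y x) * indicator B (x, y) \<partial>count_space UNIV) \<partial>count_space UNIV)"
  proof (intro nn_integral_cong arg_cong2[where f="(*)"] refl)
    fix x
    show "Tq P n x (real (length (\<phi> x)) + c) = (\<integral>\<^sup>+ y. ennreal (condYX P n y x) * indicator B (x, y) \<partial>count_space UNIV)"
      unfolding Tq_ind B_def by (intro nn_integral_cong) (simp add: indicator_def)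
  qed
  also have "\<dots> = emeasure (measure_pmf (P n)) B"
    by (subst nn_integral_indicator[symmetric], simp, rule K2X[symmetric])
  also have "\<dots> \<le> ennreal (SW_error P n \<phi> \<psi>) + ennreal (2 powr (- c))"
    unfolding B_def by (rule B_bound[OF gs code c0])
  also have "\<dots> = ennreal (SW_error P n \<phi> \<psi> + 2 powr (- c))"
    by (rule ennreal_plus[symmetric]) (simp_all add: SW_error_def)
  finally have le: "ennreal \<epsilon> * emeasure (measure_pmf (pX P n)) bad \<le> ennreal (SW_error P n \<phi> \<psi> + 2 powr (- c))" .
  define m where "m = measure (measure_pmf (pX P n)) bad"
  have em: "emeasure (measure_pmf (pX P n)) bad = ennreal m"
    by (simp add: m_def measure_pmf.emeasure_eq_measure)
  have m0: "0 \<le> m" by (simp add: m_def)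
  have r0: "0 \<le> SW_error P n \<phi> \<psi> + 2 powr (- c)" by (simp add: SW_error_def)
  have "ennreal (\<epsilon> * m) \<le> ennreal (SW_error P n \<phi> \<psi> + 2 powr (- c))"
    using le unfolding em using eps m0 by (simp add: ennreal_mult)
  then have "\<epsilon> * m \<le> SW_error P n \<phi> \<psi> + 2 powr (- c)"
    using r0 by (simp add: ennreal_le_iff)
  then have "m \<le> (SW_error P n \<phi> \<psi> + 2 powr (- c)) / \<epsilon>"
    using eps by (simp add: field_simps)
  then show ?thesis unfolding bad_def[symmetric] em by (rule ennreal_leI)
qed

lemma conv_n:
  fixes P :: "nat \<Rightarrow> ('a::countable list \<times> 'b::countable list) pmf"
  assumes gs: "general_source P" and ui: "uniformly_integrable_source P" and n: "1 \<le> n"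
    and code: "SW_code n \<phi>" and eps: "0 < \<epsilon>" "\<epsilon> < 1" and c0: "0 \<le> c" and u0: "0 \<le> u"
  shows "(\<integral>\<^sup>+ x. ennreal (pmf (pX P n) x * hbar P n \<epsilon> x) \<partial>count_space {x. length x = n})
   \<le> (\<integral>\<^sup>+ xy. ennreal (real (length (\<phi> (fst xy)))) \<partial>measure_pmf (P n)) + ennreal c
     + ennreal (1/\<epsilon>) * (ennreal (real n) * (ennreal u * ennreal ((SW_error P n \<phi> \<psi> + 2 powr (- c)) / \<epsilon>) + TS P u))"
proof -
  define bad where "bad = {x. Tq P n x (real (length (\<phi> x)) + c) > ennreal \<epsilon>}"
  define f1 where "f1 x = ennreal (pmf (pX P n) x) * ennreal (real (length (\<phi> x)))" for x
  define f2 where "f2 x = ennreal (pmf (pX P n) x) * ennreal c" for x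
  define f3 where "f3 x = ennreal (pmf (pX P n) x) * (ExW P n x * indicator bad x)" for x
  have pw: "ennreal (pmf (pX P n) x * hbar P n \<epsilon> x) \<le> f1 x + f2 x + ennreal (1/\<epsilon>) * f3 x"
    if len: "length x = n" for x
  proof -
    have px: "pmf (pX P n) x > 0" by (rule gs_posX[OF gs len])
    have fin: "ExW P n x < \<infinity>" by (rule Ex_finite[of P n x, OF ui n px])
    have ne: "{a. Tq P n x a \<le> ennreal \<epsilon>} \<noteq> {}" by (rule S_nonempty[of P n x \<epsilon>, OF px eps fin])
    have h0: "0 \<le> hbar P n \<epsilon> x" by (rule hbar_nonneg[of P n x \<epsilon>, OF px eps ne])
    show ?thesis
    proof (cases "x \<in> bad")
      case False
      then have "Tq P n x (real (length (\<phi> x)) + c) \<le> ennreal \<epsilon>" unfolding bad_def by simp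
      then have "hbar P n \<epsilon> x \<le> real (length (\<phi> x)) + c" by (rule hbar_le[of P n x \<epsilon>, OF px eps])
      then have "pmf (pX P n) x * hbar P n \<epsilon> x \<le> pmf (pX P n) x * real (length (\<phi> x)) + pmf (pX P n) x * c"
        using px by (simp add: distrib_left[symmetric])
      then have "ennreal (pmf (pX P n) x * hbar P n \<epsilon> x) \<le> ennreal (pmf (pX P n) x * real (length (\<phi> x)) + pmf (pX P n) x * c)"
        by (rule ennreal_leI)
      also have "\<dots> = f1 x + f2 x"
        using c0 by (simp add: f1_def f2_def ennreal_plus ennreal_mult)
      finally show ?thesis by (simp add: add_increasing2)
    next
      case True
      have "hbar P n \<epsilon> x \<le> enn2real (ExW P n x) / \<epsilon>" by (rule hbar_markov[of P n x \<epsilon>, OF px eps fin])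
      then have "pmf (pX P n) x * hbar P n \<epsilon> x \<le> pmf (pX P n) x * (enn2real (ExW P n x) / \<epsilon>)"
        using px by (intro mult_left_mono) simp_all
      also have "\<dots> = (1/\<epsilon>) * (pmf (pX P n) x * enn2real (ExW P n x))" by simp
      finally have "pmf (pX P n) x * hbar P n \<epsilon> x \<le> (1/\<epsilon>) * (pmf (pX P n) x * enn2real (ExW P n x))" .
      then have "ennreal (pmf (pX P n) x * hbar P n \<epsilon> x) \<le> ennreal ((1/\<epsilon>) * (pmf (pX P n) x * enn2real (ExW P n x)))"
        by (rule ennreal_leI)
      also have "\<dots> = ennreal (1/\<epsilon>) * f3 x"
      proof -
        have E: "ExW P n x = ennreal (enn2real (ExW P n x))"
          using fin by (simp add: ennreal_enn2real_if less_top[symmetric] infinity_ennreal_def)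
        have "ennreal (1/\<epsilon>) * f3 x = ennreal (1/\<epsilon>) * (ennreal (pmf (pX P n) x) * ennreal (enn2real (ExW P n x)))"
          unfolding f3_def using True by (subst E) simp
        also have "\<dots> = ennreal ((1/\<epsilon>) * (pmf (pX P n) x * enn2real (ExW P n x)))"
          using eps by (simp only: ennreal_mult[symmetric] pmf_nonneg enn2real_nonneg mult_nonneg_nonneg divide_nonneg_nonneg less_imp_le zero_le_one)
        finally show ?thesis ..
      qed
      finally show ?thesis by (simp add: add_increasing)
    qed
  qed
  have "(\<integral>\<^sup>+ x. ennreal (pmf (pX P n) x * hbar P n \<epsilon> x) \<partial>count_space {x. length x = n})
      \<le> (\<integral>\<^sup>+ x. f1 x + f2 x + ennreal (1/\<epsilon>) * f3 x \<partial>count_space {x. length x = n})"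
    by (intro nn_integral_mono pw) simp
  also have "\<dots> \<le> (\<integral>\<^sup>+ x. f1 x + f2 x + ennreal (1/\<epsilon>) * f3 x \<partial>count_space UNIV)"
    by (rule count_space_mono_int) simp
  also have "\<dots> = integral\<^sup>N (count_space UNIV) f1 + integral\<^sup>N (count_space UNIV) f2 + ennreal (1/\<epsilon>) * integral\<^sup>N (count_space UNIV) f3"
    by (simp add: nn_integral_add nn_integral_cmult)
  also have "integral\<^sup>N (count_space UNIV) f1 = (\<integral>\<^sup>+ xy. ennreal (real (length (\<phi> (fst xy)))) \<partial>measure_pmf (P n))"
    unfolding f1_def by (rule Lexp_sum[symmetric])
  also have "integral\<^sup>N (count_space UNIV) f2 = ennreal c"
    unfolding f2_def by (simp add: nn_integral_multc nn_integral_pmf)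
  also have "integral\<^sup>N (count_space UNIV) f3 \<le> ennreal (real n) * (ennreal u * ennreal ((SW_error P n \<phi> \<psi> + 2 powr (- c)) / \<epsilon>) + TS P u)"
  proof -
    define A :: "('a list \<times> 'b list) set" where "A = fst -` bad"
    have "integral\<^sup>N (count_space UNIV) f3 = (\<integral>\<^sup>+ xy. ennreal (Wd P n (fst xy) (snd xy)) * indicator A xy \<partial>measure_pmf (P n))"
    proof -
      have "(\<integral>\<^sup>+ xy. ennreal (Wd P n (fst xy) (snd xy)) * indicator A xy \<partial>measure_pmf (P n))
        = (\<integral>\<^sup>+ x. ennreal (pmf (pX P n) x) * (\<integral>\<^sup>+ y. ennreal (condYX P n y x) * (ennreal (Wd P n x y) * indicator A (x, y)) \<partial>count_space UNIV) \<partial>count_space UNIV)"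
        by (rule K2X[where g="\<lambda>xy. ennreal (Wd P n (fst xy) (snd xy)) * indicator A xy", simplified])
      also have "\<dots> = integral\<^sup>N (count_space UNIV) f3"
        unfolding f3_def
      proof (intro nn_integral_cong arg_cong2[where f="(*)"] refl)
        fix x
        have "(\<integral>\<^sup>+ y. ennreal (condYX P n y x) * (ennreal (Wd P n x y) * indicator A (x, y)) \<partial>count_space UNIV)
          = (\<integral>\<^sup>+ y. ennreal (condYX P n y x) * ennreal (Wd P n x y) * indicator bad x \<partial>count_space UNIV)"
          by (intro nn_integral_cong) (simp add: A_def indicator_def mult.assoc)
        also have "\<dots> = ExW P n x * indicator bad x"
          unfolding ExW_def by (rule nn_integral_multc) simp
        finally show "(\<integral>\<^sup>+ y. ennreal (condYX P n y x) * (ennreal (Wd P n x y) * indicator A (x, y)) \<partial>count_space UNIV) = ExW P n x * indicator bad x" .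
      qed
      finally show ?thesis ..
    qed
    also have "\<dots> = ennreal (real n) * (\<integral>\<^sup>+ xy. ennreal (info_density P n xy) * indicator A xy \<partial>measure_pmf (P n))"
      by (rule W_integral[OF n])
    also have "\<dots> \<le> ennreal (real n) * (ennreal u * emeasure (measure_pmf (P n)) A + TS P u)"
      by (intro mult_left_mono UI_bound[OF n]) simp
    also have "emeasure (measure_pmf (P n)) A = emeasure (measure_pmf (pX P n)) bad"
      unfolding A_def by (simp add: emeasure_map_pmf)
    also have "\<dots> \<le> ennreal ((SW_error P n \<phi> \<psi> + 2 powr (- c)) / \<epsilon>)"
      unfolding bad_def by (rule bad_measure[OF gs code c0 eps(1)])
    finally show ?thesis by (simp add: mult_left_mono add_right_mono)
  qed
  finally show ?thesis by (simp add: mult_left_mono add_left_mono)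
qed

definition gfun :: "(nat \<Rightarrow> ('a list \<times> 'b list) pmf) \<Rightarrow> real \<Rightarrow> ereal" where
  "gfun P \<epsilon> = limsup (\<lambda>n. ereal (1 / real n) * Hs_eps P n \<epsilon>)"

lemma Hs_bar_gfun: "Hs_bar P = Lim (at_right 0) (gfun P)"
  unfolding Hs_bar_def gfun_def[abs_def] ..

lemma ereal_scale_bound:
  assumes n: "1 \<le> n" and le: "H \<le> L + ennreal (real n * cn)" and cn: "0 \<le> cn"
  shows "ereal (1 / real n) * enn2ereal H \<le> ereal (1 / real n) * enn2ereal L + ereal cn"
proof -
  have "enn2ereal H \<le> enn2ereal L + ereal (real n * cn)"
    using le cn by (simp add: less_eq_ennreal.rep_eq plus_ennreal.rep_eq)
  then have "ereal (1 / real n) * enn2ereal H \<le> ereal (1 / real n) * (enn2ereal L + ereal (real n * cn))"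
    by (intro ereal_mult_left_mono) simp_all
  also have "\<dots> = ereal (1 / real n) * enn2ereal L + ereal (1 / real n) * ereal (real n * cn)"
    by (rule ereal_pos_distrib) simp_all
  also have "ereal (1 / real n) * ereal (real n * cn) = ereal cn" using n by simp
  finally show ?thesis .
qed

lemma pow_tendsto: "0 < g \<Longrightarrow> (\<lambda>n. (2::real) powr (- (g * real n))) \<longlonglongrightarrow> 0"
proof -
  assume g: "0 < g"
  have eq: "(2::real) powr (- (g * real n)) = (2 powr (- g)) ^ n" for n
    by (simp add: powr_realpow[symmetric] powr_powr)
  have "(2::real) powr (- g) < 1" using g by (simp add: powr_less_one)
  then have "(\<lambda>n. (2 powr (- g)) ^ n) \<longlonglongrightarrow> (0::real)"
    by (intro LIMSEQ_power_zero) simp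
  then show ?thesis unfolding eq .
qed

lemma conv_g:
  fixes P :: "nat \<Rightarrow> ('a::countable list \<times> 'b::countable list) pmf"
  assumes gs: "general_source P" and ui: "uniformly_integrable_source P"
    and ach: "weakly_achievable P R" and eps: "0 < \<epsilon>" "\<epsilon> < 1"
  shows "gfun P \<epsilon> \<le> ereal R"
proof -
  obtain \<phi> \<psi> where code: "\<And>n. SW_code n (\<phi> n)"
    and err: "(\<lambda>n. SW_error P n (\<phi> n) (\<psi> n)) \<longlonglongrightarrow> 0"
    and rate: "limsup (\<lambda>n. ereal (1 / real n) * SW_exp_length P n (\<phi> n)) \<le> ereal R"
    using ach unfolding weakly_achievable_def by blast
  show ?thesis
  proof (rule ereal_le_epsilon2)
    fix \<delta> :: real assume d0: "0 < \<delta>"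
    define \<gamma> where "\<gamma> = \<delta> / 2"
    define d where "d = \<epsilon> * \<delta> / 2"
    have g0: "0 < \<gamma>" and dd: "0 < d" using d0 eps by (simp_all add: \<gamma>_def d_def)
    obtain U where U: "\<forall>u\<ge>U. TS P u < ennreal d" using UI_exists[OF ui, of "ennreal d"] dd by auto
    define u where "u = max U 0"
    have u0: "0 \<le> u" and TSu: "TS P u \<le> ennreal d" using U by (auto simp: u_def intro: less_imp_le)
    define e where "e n = SW_error P n (\<phi> n) (\<psi> n)" for n
    have e0: "0 \<le> e n" for n by (simp add: e_def SW_error_def)
    define cn where "cn n = \<gamma> + (1/\<epsilon>) * (u * ((e n + 2 powr (- (\<gamma> * real n))) / \<epsilon>) + d)" for n
    have cn0: "0 \<le> cn n" for n using g0 eps u0 e0[of n] dd unfolding cn_def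
      by (intro add_nonneg_nonneg mult_nonneg_nonneg divide_nonneg_nonneg) simp_all
    have bound: "ereal (1 / real n) * Hs_eps P n \<epsilon> \<le> ereal (1 / real n) * SW_exp_length P n (\<phi> n) + ereal (cn n)"
      if n: "1 \<le> n" for n
    proof -
      define H where "H = (\<integral>\<^sup>+ x. ennreal (pmf (pX P n) x * hbar P n \<epsilon> x) \<partial>count_space {x. length x = n})"
      define L where "L = (\<integral>\<^sup>+ xy. ennreal (real (length (\<phi> n (fst xy)))) \<partial>measure_pmf (P n))"
      have c0: "0 \<le> \<gamma> * real n" using g0 by simp
      have "H \<le> L + ennreal (\<gamma> * real n) + ennreal (1/\<epsilon>) * (ennreal (real n) * (ennreal u * ennreal ((e n + 2 powr (- (\<gamma> * real n))) / \<epsilon>) + TS P u))"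
        unfolding H_def L_def e_def by (rule conv_n[OF gs ui n code eps c0 u0])
      also have "\<dots> \<le> L + ennreal (\<gamma> * real n) + ennreal (1/\<epsilon>) * (ennreal (real n) * (ennreal u * ennreal ((e n + 2 powr (- (\<gamma> * real n))) / \<epsilon>) + ennreal d))"
        by (intro add_left_mono mult_left_mono TSu) simp_all
      finally have h1: "H \<le> L + ennreal (\<gamma> * real n) + ennreal (1/\<epsilon>) * (ennreal (real n) * (ennreal u * ennreal ((e n + 2 powr (- (\<gamma> * real n))) / \<epsilon>) + ennreal d))" .
      have eq: "ennreal (\<gamma> * real n) + ennreal (1/\<epsilon>) * (ennreal (real n) * (ennreal u * ennreal ((e n + 2 powr (- (\<gamma> * real n))) / \<epsilon>) + ennreal d))
          = ennreal (real n * cn n)"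
      proof -
        have a: "0 \<le> (e n + 2 powr (- (\<gamma> * real n))) / \<epsilon>" using e0[of n] eps by simp
        have "ennreal (1/\<epsilon>) * (ennreal (real n) * (ennreal u * ennreal ((e n + 2 powr (- (\<gamma> * real n))) / \<epsilon>) + ennreal d))
            = ennreal ((1/\<epsilon>) * (real n * (u * ((e n + 2 powr (- (\<gamma> * real n))) / \<epsilon>) + d)))"
        proof -
          define A where "A = (e n + 2 powr (- (\<gamma> * real n))) / \<epsilon>"
          have A0: "0 \<le> A" using a by (simp add: A_def)
          have "ennreal u * ennreal A = ennreal (u * A)" using u0 A0 by (rule ennreal_mult[symmetric])
          moreover have "ennreal (u * A) + ennreal d = ennreal (u * A + d)" using u0 A0 dd by (intro ennreal_plus[symmetric]) simp_all
          moreover have "ennreal (real n) * ennreal (u * A + d) = ennreal (real n * (u * A + d))" using u0 A0 dd by (intro ennreal_mult[symmetric]) simp_all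
          moreover have "ennreal (1/\<epsilon>) * ennreal (real n * (u * A + d)) = ennreal ((1/\<epsilon>) * (real n * (u * A + d)))" using u0 A0 dd eps by (intro ennreal_mult[symmetric]) simp_all
          ultimately show ?thesis unfolding A_def[symmetric] by simp
        qed
        moreover have "ennreal (\<gamma> * real n) + ennreal ((1/\<epsilon>) * (real n * (u * ((e n + 2 powr (- (\<gamma> * real n))) / \<epsilon>) + d)))
            = ennreal (\<gamma> * real n + (1/\<epsilon>) * (real n * (u * ((e n + 2 powr (- (\<gamma> * real n))) / \<epsilon>) + d)))"
          using eps u0 a dd c0 g0 by (intro ennreal_plus[symmetric] mult_nonneg_nonneg add_nonneg_nonneg) simp_all
        moreover have "\<gamma> * real n + (1/\<epsilon>) * (real n * (u * ((e n + 2 powr (- (\<gamma> * real n))) / \<epsilon>) + d)) = real n * cn n"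
          unfolding cn_def by (simp add: algebra_simps)
        ultimately show ?thesis by simp
      qed
      have "H \<le> L + ennreal (real n * cn n)" using h1 unfolding add.assoc eq .
      from ereal_scale_bound[OF n this cn0]
      show ?thesis unfolding Hs_eps_def SW_exp_length_def H_def L_def by simp
    qed
    have "gfun P \<epsilon> \<le> limsup (\<lambda>n. ereal (1 / real n) * SW_exp_length P n (\<phi> n) + ereal (cn n))"
      unfolding gfun_def
      by (rule Limsup_mono) (use bound in \<open>auto simp: eventually_sequentially\<close>)
    also have "\<dots> \<le> limsup (\<lambda>n. ereal (1 / real n) * SW_exp_length P n (\<phi> n)) + limsup (\<lambda>n. ereal (cn n))"
      by (rule ereal_limsup_add_mono)
    also have "limsup (\<lambda>n. ereal (cn n)) = ereal \<delta>"
    proof -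
      define sn where "sn n = e n + 2 powr (- (\<gamma> * real n))" for n
      have "sn \<longlonglongrightarrow> 0 + 0"
        unfolding sn_def[abs_def] by (intro tendsto_add pow_tendsto g0) (use err in \<open>simp add: e_def[abs_def]\<close>)
      then have sn: "sn \<longlonglongrightarrow> 0" by simp
      have "(\<lambda>n. \<gamma> + (1/\<epsilon>) * (u * (sn n / \<epsilon>) + d)) \<longlonglongrightarrow> \<gamma> + (1/\<epsilon>) * (u * ((0 + 0) / \<epsilon>) + d)"
        using eps sn by (intro tendsto_add tendsto_mult tendsto_divide tendsto_const) simp_all
      moreover have "cn = (\<lambda>n. \<gamma> + (1/\<epsilon>) * (u * (sn n / \<epsilon>) + d))"
        unfolding cn_def[abs_def] sn_def[abs_def] ..
      ultimately have "cn \<longlonglongrightarrow> \<gamma> + (1/\<epsilon>) * (u * ((0 + 0) / \<epsilon>) + d)" by simp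
      also have "\<gamma> + (1/\<epsilon>) * (u * ((0 + 0) / \<epsilon>) + d) = \<delta>"
        using eps by (simp add: \<gamma>_def d_def)
      finally have "(\<lambda>n. ereal (cn n)) \<longlonglongrightarrow> ereal \<delta>" by (rule tendsto_ereal)
      then show ?thesis by (rule lim_imp_Limsup[rotated]) simp
    qed
    also have "limsup (\<lambda>n. ereal (1 / real n) * SW_exp_length P n (\<phi> n)) + ereal \<delta> \<le> ereal R + ereal \<delta>" using rate by (rule add_right_mono)
    finally show "gfun P \<epsilon> \<le> ereal R + ereal \<delta>" .
  qed
qed

lemma Hs_eps_anti:
  fixes P :: "nat \<Rightarrow> ('a::countable list \<times> 'b::countable list) pmf"
  assumes gs: "general_source P" and ui: "uniformly_integrable_source P" and n: "1 \<le> n"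
    and e: "0 < \<epsilon>1" "\<epsilon>1 \<le> \<epsilon>2" "\<epsilon>2 < 1"
  shows "Hs_eps P n \<epsilon>2 \<le> Hs_eps P n \<epsilon>1"
proof -
  have "(\<integral>\<^sup>+ x. ennreal (pmf (pX P n) x * hbar P n \<epsilon>2 x) \<partial>count_space {x. length x = n})
     \<le> (\<integral>\<^sup>+ x. ennreal (pmf (pX P n) x * hbar P n \<epsilon>1 x) \<partial>count_space {x. length x = n})"
  proof (intro nn_integral_mono ennreal_leI mult_left_mono)
    fix x assume "x \<in> space (count_space {x::'a list. length x = n})"
    then have len: "length x = n" by simp
    have px: "pmf (pX P n) x > 0" by (rule gs_posX[OF gs len])
    show "hbar P n \<epsilon>2 x \<le> hbar P n \<epsilon>1 x"
      by (rule hbar_mono[of P n x, OF px e Ex_finite[OF ui n px]])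
  qed simp
  then show ?thesis unfolding Hs_eps_def by (simp add: less_eq_ennreal.rep_eq[symmetric])
qed

lemma gfun_anti:
  fixes P :: "nat \<Rightarrow> ('a::countable list \<times> 'b::countable list) pmf"
  assumes gs: "general_source P" and ui: "uniformly_integrable_source P"
    and e: "0 < \<epsilon>1" "\<epsilon>1 \<le> \<epsilon>2" "\<epsilon>2 < 1"
  shows "gfun P \<epsilon>2 \<le> gfun P \<epsilon>1"
  unfolding gfun_def
proof (rule Limsup_mono)
  show "\<forall>\<^sub>F n in sequentially. ereal (1 / real n) * Hs_eps P n \<epsilon>2 \<le> ereal (1 / real n) * Hs_eps P n \<epsilon>1"
    unfolding eventually_sequentially
    by (intro exI[of _ 1] allI impI ereal_mult_left_mono Hs_eps_anti[OF gs ui _ e]) simp_all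
qed

lemma gfun_nonneg: "0 \<le> gfun P \<epsilon>"
  unfolding gfun_def
  by (rule le_Limsup) (simp_all add: Hs_eps_def)

lemma Hs_bar_SUP:
  fixes P :: "nat \<Rightarrow> ('a::countable list \<times> 'b::countable list) pmf"
  assumes gs: "general_source P" and ui: "uniformly_integrable_source P"
  shows "Hs_bar P = (SUP \<epsilon>\<in>{0<..<1}. gfun P \<epsilon>)"
proof -
  define S where "S = (SUP \<epsilon>\<in>{0<..<1::real}. gfun P \<epsilon>)"
  have "(gfun P \<longlongrightarrow> S) (at_right 0)"
  proof (rule order_tendstoI)
    fix a assume "a < S"
    then obtain \<epsilon>0 where e0: "\<epsilon>0 \<in> {0<..<1}" "a < gfun P \<epsilon>0" unfolding S_def less_SUP_iff by blast
    show "eventually (\<lambda>\<epsilon>. a < gfun P \<epsilon>) (at_right 0)"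
      unfolding eventually_at_right_field
    proof (intro exI[of _ \<epsilon>0] conjI allI impI)
      show "0 < \<epsilon>0" using e0 by simp
      fix \<epsilon> :: real assume "0 < \<epsilon>" "\<epsilon> < \<epsilon>0"
      then have "gfun P \<epsilon>0 \<le> gfun P \<epsilon>" using e0 by (intro gfun_anti[OF gs ui]) simp_all
      then show "a < gfun P \<epsilon>" using e0 by simp
    qed
  next
    fix a assume "S < a"
    show "eventually (\<lambda>\<epsilon>. gfun P \<epsilon> < a) (at_right 0)"
      unfolding eventually_at_right_field
    proof (intro exI[of _ 1] conjI allI impI)
      fix \<epsilon> :: real assume "0 < \<epsilon>" "\<epsilon> < 1"
      then have "gfun P \<epsilon> \<le> S" unfolding S_def by (intro SUP_upper) simp
      then show "gfun P \<epsilon> < a" using \<open>S < a\<close> by simp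
    qed simp
  qed
  then show ?thesis unfolding Hs_bar_gfun S_def by (rule tendsto_Lim[rotated]) simp
qed

lemma unary_eq:
  "replicate j1 True @ False # b1 = replicate j2 True @ False # b2 \<Longrightarrow> j1 = j2 \<and> b1 = b2"
proof (induction j1 arbitrary: j2)
  case 0 then show ?case by (cases j2) auto
next
  case (Suc j1) then show ?case by (cases j2) auto
qed

lemma unary_pf:
  "strict_prefix (replicate j1 True @ False # b1) (replicate j2 True @ False # b2) \<Longrightarrow>
   length b1 = G j1 \<Longrightarrow> length b2 = G j2 \<Longrightarrow> False"
proof (induction j1 arbitrary: j2 G)
  case 0
  then show ?case
  proof (cases j2)
    case 0
    with "0.prems" have "strict_prefix b1 b2" "length b1 = length b2" by auto
    then show False using prefix_length_less by fastforce
  next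
    case (Suc j2')
    with "0.prems"(1) show False by (simp add: strict_prefix_def)
  qed
next
  case (Suc j1)
  show ?case
  proof (cases j2)
    case 0
    with Suc.prems(1) show False by (simp add: strict_prefix_def)
  next
    case (Suc j2')
    with Suc.prems have "strict_prefix (replicate j1 True @ False # b1) (replicate j2' True @ False # b2)"
      by (simp add: strict_prefix_def)
    moreover have "length b1 = (G \<circ> Suc) j1" "length b2 = (G \<circ> Suc) j2'" using Suc.prems \<open>j2 = Suc j2'\<close> by simp_all
    ultimately show False by (rule Suc.IH)
  qed
qed

lemma fin_approx:
  fixes p :: "'a::countable pmf"
  assumes "0 < \<eta>"
  shows "\<exists>F. finite F \<and> measure_pmf.prob p (- F) \<le> \<eta>"
proof -
  define A where "A N = {x::'a. N \<le> to_nat x}" for N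
  have dec: "decseq A" unfolding A_def decseq_def by auto
  have "(\<lambda>N. measure_pmf.prob p (A N)) \<longlonglongrightarrow> measure_pmf.prob p (\<Inter>i. A i)"
    by (rule measure_pmf.finite_Lim_measure_decseq[OF _ dec]) simp
  moreover have "(\<Inter>i. A i) = {}" unfolding A_def by auto (metis Suc_n_not_le_n)
  ultimately have "(\<lambda>N. measure_pmf.prob p (A N)) \<longlonglongrightarrow> 0" by simp
  then have "eventually (\<lambda>N. measure_pmf.prob p (A N) < \<eta>) sequentially"
    using assms by (rule order_tendstoD(2))
  then obtain N where N: "measure_pmf.prob p (A N) < \<eta>" by (auto simp: eventually_sequentially)
  define F :: "'a set" where "F = to_nat -` {..<N}"
  have fin: "finite F" unfolding F_def by (rule finite_vimageI) simp_all
  have "- F = A N" unfolding F_def A_def by auto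
  then show ?thesis using fin N by (intro exI[of _ F]) simp
qed

lemma nn_integral_pmf_swap:
  "(\<integral>\<^sup>+ a. \<integral>\<^sup>+ b. f a b \<partial>measure_pmf B \<partial>measure_pmf A) = (\<integral>\<^sup>+ b. \<integral>\<^sup>+ a. f a b \<partial>measure_pmf A \<partial>measure_pmf B)"
proof -
  have "(\<integral>\<^sup>+ a. \<integral>\<^sup>+ b. f a b \<partial>measure_pmf B \<partial>measure_pmf A) = (\<integral>\<^sup>+ z. f (fst z) (snd z) \<partial>measure_pmf (pair_pmf A B))"
    by (simp add: nn_integral_pair_pmf')
  also have "\<dots> = (\<integral>\<^sup>+ z. f (snd z) (fst z) \<partial>measure_pmf (pair_pmf B A))"
    by (subst pair_commute_pmf) (simp add: case_prod_unfold)
  also have "\<dots> = (\<integral>\<^sup>+ b. \<integral>\<^sup>+ a. f a b \<partial>measure_pmf A \<partial>measure_pmf B)"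
    by (simp add: nn_integral_pair_pmf')
  finally show ?thesis .
qed

lemma nn_integral_count_pmf_swap:
  fixes f :: "'a::countable \<Rightarrow> 'b \<Rightarrow> ennreal"
  shows "(\<integral>\<^sup>+ b. \<integral>\<^sup>+ a. f a b \<partial>count_space UNIV \<partial>measure_pmf B) = (\<integral>\<^sup>+ a. \<integral>\<^sup>+ b. f a b \<partial>measure_pmf B \<partial>count_space UNIV)"
  by (rule nn_integral_count_space_nn_integral) simp_all

lemma card_bool_lists: "card {v::bool list. length v = L} = 2 ^ L"
  using card_lists_length_eq[of "UNIV::bool set" L] by simp

lemma finite_bool_lists: "finite {v::bool list. length v = L}"
  using finite_lists_length_eq[of "UNIV::bool set" L] by simp

lemma random_component:
  fixes F :: "'a set" and Lf :: "'a \<Rightarrow> nat" and V :: "('a \<Rightarrow> bool list) \<Rightarrow> bool list"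
  assumes fin: "finite F" and x: "x \<in> F"
    and V: "\<And>g v. V (g(x := v)) = V g"
  shows "(\<integral>\<^sup>+ f. indicator {f. V f = take (Lf x) (f x @ replicate (Lf x) False)} f
           \<partial>measure_pmf (Pi_pmf F [] (\<lambda>z. pmf_of_set {v. length v = Lf z}))) \<le> ennreal ((1/2) ^ Lf x)"
proof -
  define q where "q z = pmf_of_set {v::bool list. length v = Lf z}" for z
  define S where "S = {v::bool list. length v = Lf x}"
  have Sne: "S \<noteq> {}" unfolding S_def by (auto intro: exI[of _ "replicate (Lf x) False"])
  have Sfin: "finite S" unfolding S_def by (rule finite_bool_lists)
  have Scard: "card S = 2 ^ Lf x" unfolding S_def by (rule card_bool_lists)
  have F: "F = insert x (F - {x})" using x by auto
  have "Pi_pmf F [] q = map_pmf (\<lambda>(y, f). f(x := y)) (pair_pmf (q x) (Pi_pmf (F - {x}) [] q))"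
    by (subst F, rule Pi_pmf_insert) (use fin in simp_all)
  then have "(\<integral>\<^sup>+ f. indicator {f. V f = take (Lf x) (f x @ replicate (Lf x) False)} f \<partial>measure_pmf (Pi_pmf F [] q))
      = (\<integral>\<^sup>+ v. \<integral>\<^sup>+ g. indicator {f. V f = take (Lf x) (f x @ replicate (Lf x) False)} (g(x := v)) \<partial>measure_pmf (Pi_pmf (F - {x}) [] q) \<partial>measure_pmf (q x))"
    by (simp add: nn_integral_pair_pmf' case_prod_unfold)
  also have "\<dots> = (\<integral>\<^sup>+ g. \<integral>\<^sup>+ v. indicator {v. V g = take (Lf x) (v @ replicate (Lf x) False)} v \<partial>measure_pmf (q x) \<partial>measure_pmf (Pi_pmf (F - {x}) [] q))"
    by (subst nn_integral_pmf_swap) (simp add: V indicator_def)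
  also have "\<dots> \<le> (\<integral>\<^sup>+ g. ennreal ((1/2) ^ Lf x) \<partial>measure_pmf (Pi_pmf (F - {x}) [] q))"
  proof (intro nn_integral_mono)
    fix g
    have "(\<integral>\<^sup>+ v. indicator {v. V g = take (Lf x) (v @ replicate (Lf x) False)} v \<partial>measure_pmf (q x))
        = (\<Sum>v\<in>S. indicator {v. V g = take (Lf x) (v @ replicate (Lf x) False)} v :: ennreal) / of_nat (card S)"
      unfolding q_def S_def[symmetric] by (rule nn_integral_pmf_of_set[OF Sne Sfin])
    also have "(\<Sum>v\<in>S. indicator {v. V g = take (Lf x) (v @ replicate (Lf x) False)} v :: ennreal) = (\<Sum>v\<in>S. indicator {V g} v :: ennreal)"
      by (intro sum.cong refl) (simp add: S_def indicator_def)
    also have "\<dots> \<le> 1"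
    proof (cases "V g \<in> S")
      case True
      have "(\<Sum>v\<in>S. indicator {V g} v :: ennreal) = (\<Sum>v\<in>{V g}. indicator {V g} v)"
        by (intro sum.mono_neutral_right Sfin) (use True in auto)
      then show ?thesis by simp
    next
      case False
      then have "(\<Sum>v\<in>S. indicator {V g} v :: ennreal) = 0" by (intro sum.neutral) (auto simp: indicator_def)
      then show ?thesis by simp
    qed
    finally have "(\<integral>\<^sup>+ v. indicator {v. V g = take (Lf x) (v @ replicate (Lf x) False)} v \<partial>measure_pmf (q x)) \<le> 1 / of_nat (card S)"
      by (simp add: divide_right_mono_ennreal)
    also have "(1::ennreal) / of_nat (card S) = ennreal ((1/2) ^ Lf x)"
    proof -
      have "(of_nat (card S) :: ennreal) = ennreal (2 ^ Lf x)"
        unfolding Scard ennreal_of_nat_eq_real_of_nat by simp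
      then have "(1::ennreal) / of_nat (card S) = ennreal 1 / ennreal (2 ^ Lf x)" by simp
      also have "\<dots> = ennreal (1 / 2 ^ Lf x)" by (rule divide_ennreal) simp_all
      finally show ?thesis by (simp add: power_one_over)
    qed
    finally show "(\<integral>\<^sup>+ v. indicator {v. V g = take (Lf x) (v @ replicate (Lf x) False)} v \<partial>measure_pmf (q x)) \<le> ennreal ((1/2) ^ Lf x)" .
  qed
  also have "\<dots> = ennreal ((1/2) ^ Lf x)" by simp
  finally show ?thesis unfolding q_def .
qed

lemma diagonal:
  fixes Q :: "nat \<Rightarrow> nat \<Rightarrow> bool"
  assumes ev: "\<And>k. eventually (\<lambda>n. Q k n) sequentially"
  shows "\<exists>\<kappa>. filterlim \<kappa> at_top sequentially \<and> eventually (\<lambda>n. Q (\<kappa> n) n) sequentially"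
proof -
  have "\<forall>k. \<exists>N. \<forall>n\<ge>N. \<forall>j\<le>k. Q j n"
  proof
    fix k
    have "eventually (\<lambda>n. \<forall>j\<in>{..k}. Q j n) sequentially"
      by (rule eventually_ball_finite) (auto intro: ev)
    then have "eventually (\<lambda>n. \<forall>j\<le>k. Q j n) sequentially" by (rule eventually_mono) auto
    then show "\<exists>N. \<forall>n\<ge>N. \<forall>j\<le>k. Q j n" by (simp add: eventually_sequentially)
  qed
  then obtain N where N: "\<And>k n j. N k \<le> n \<Longrightarrow> j \<le> k \<Longrightarrow> Q j n" by metis
  define \<kappa> where "\<kappa> n = Max {k. k \<le> n \<and> N k \<le> n}" for n
  have fin: "finite {k. k \<le> n \<and> N k \<le> n}" for n by simp
  have mem: "N 0 \<le> n \<Longrightarrow> \<kappa> n \<in> {k. k \<le> n \<and> N k \<le> n}" for n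
    unfolding \<kappa>_def by (rule Max_in[OF fin]) auto
  have "filterlim \<kappa> at_top sequentially"
    unfolding filterlim_at_top eventually_sequentially
  proof (intro allI exI[of _ "max (N 0) _"] impI)
    fix K n assume "max (N 0) (max K (N K)) \<le> n"
    then have "K \<in> {k. k \<le> n \<and> N k \<le> n}" by auto
    then show "K \<le> \<kappa> n" unfolding \<kappa>_def by (rule Max_ge[OF fin])
  qed
  moreover have "eventually (\<lambda>n. Q (\<kappa> n) n) sequentially"
    unfolding eventually_sequentially
  proof (intro exI[of _ "N 0"] allI impI)
    fix n assume "N 0 \<le> n"
    then have "N (\<kappa> n) \<le> n" using mem by auto
    then show "Q (\<kappa> n) n" by (rule N) simp
  qed
  ultimately show ?thesis by blast
qed

context
  fixes P :: "nat \<Rightarrow> ('a list \<times> 'b list) pmf" and n :: nat and \<epsilon> :: real and t :: nat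
begin

definition jj :: "'a list \<Rightarrow> nat" where
  "jj x = nat \<lceil>(hbar P n \<epsilon> x + 1) / real t\<rceil>"

definition Lb :: "'a list \<Rightarrow> nat" where
  "Lb x = (jj x + 1) * t"

definition okp :: "'a list \<Rightarrow> 'b list \<Rightarrow> bool" where
  "okp x y \<longleftrightarrow> length x = n \<and> condXY P n x y \<ge> (1/2) ^ (jj x * t)"

definition binf :: "('a list \<Rightarrow> bool list) \<Rightarrow> 'a list \<Rightarrow> bool list" where
  "binf f x = take (Lb x) (f x @ replicate (Lb x) False)"

definition enc :: "('a list \<Rightarrow> bool list) \<Rightarrow> 'a list \<Rightarrow> bool list" where
  "enc f x = replicate (jj x) True @ False # binf f x"

definition dec :: "('a list \<Rightarrow> bool list) \<Rightarrow> bool list \<Rightarrow> 'b list \<Rightarrow> 'a list" where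
  "dec f c y = (SOME x'. enc f x' = c \<and> okp x' y)"

definition Coll :: "'a list set \<Rightarrow> ('a list \<Rightarrow> bool list) \<Rightarrow> ('a list \<times> 'b list) set" where
  "Coll F f = {(x, y). x \<in> F \<and> (\<exists>x'. x' \<noteq> x \<and> jj x' = jj x \<and> binf f x' = binf f x \<and> okp x' y)}"

lemma length_binf: "length (binf f x) = Lb x"
  by (simp add: binf_def)

lemma enc_len: "length (enc f x) = (jj x + 1) * (t + 1)"
  by (simp add: enc_def length_binf Lb_def algebra_simps)

lemma enc_eq: "enc f x = enc f x' \<Longrightarrow> jj x = jj x' \<and> binf f x = binf f x'"
  unfolding enc_def by (rule unary_eq)

lemma enc_code: "SW_code n (enc f)"
  unfolding SW_code_def prefix_free_def
proof (intro ballI notI)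
  fix u v assume "u \<in> enc f ` {x. length x = n}" "v \<in> enc f ` {x. length x = n}" "strict_prefix u v"
  then obtain x x' where "u = enc f x" "v = enc f x'" by blast
  then have "strict_prefix (replicate (jj x) True @ False # binf f x) (replicate (jj x') True @ False # binf f x')"
    using \<open>strict_prefix u v\<close> by (simp add: enc_def)
  moreover have "length (binf f x) = (\<lambda>j. (j + 1) * t) (jj x)" "length (binf f x') = (\<lambda>j. (j + 1) * t) (jj x')"
    by (simp_all add: length_binf Lb_def)
  ultimately show False by (rule unary_pf)
qed

lemma dec_correct:
  assumes ok: "okp x y" and nc: "\<not> (\<exists>x'. x' \<noteq> x \<and> jj x' = jj x \<and> binf f x' = binf f x \<and> okp x' y)"
  shows "dec f (enc f x) y = x"
  unfolding dec_def
proof (rule some_equality)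
  show "enc f x = enc f x \<and> okp x y" using ok by simp
  fix x' assume "enc f x' = enc f x \<and> okp x' y"
  then have "jj x' = jj x" "binf f x' = binf f x" "okp x' y" using enc_eq[of f x' x] by auto
  then show "x' = x" using nc by blast
qed

lemma err_subset:
  "{(x, y). dec f (enc f x) y \<noteq> x} \<subseteq> {(x, y). \<not> okp x y} \<union> {(x, y). x \<notin> F} \<union> Coll F f"
proof
  fix z assume z: "z \<in> {(x, y). dec f (enc f x) y \<noteq> x}"
  obtain x y where zxy: "z = (x, y)" by (cases z)
  show "z \<in> {(x, y). \<not> okp x y} \<union> {(x, y). x \<notin> F} \<union> Coll F f"
  proof (rule ccontr)
    assume "z \<notin> {(x, y). \<not> okp x y} \<union> {(x, y). x \<notin> F} \<union> Coll F f"
    then have "okp x y" "x \<in> F" "\<not> (\<exists>x'. x' \<noteq> x \<and> jj x' = jj x \<and> binf f x' = binf f x \<and> okp x' y)"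
      unfolding zxy Coll_def by auto
    then have "dec f (enc f x) y = x" by (intro dec_correct)
    then show False using z zxy by simp
  qed
qed

end

lemma jj_ge:
  assumes h0: "0 \<le> hbar P n \<epsilon> x" and t: "1 \<le> t"
  shows "hbar P n \<epsilon> x + 1 \<le> real (jj P n \<epsilon> t x * t)"
proof -
  define a where "a = (hbar P n \<epsilon> x + 1) / real t"
  have a0: "0 \<le> a" using h0 t by (simp add: a_def)
  have "a \<le> real (nat \<lceil>a\<rceil>)" using a0 by linarith
  then have "a * real t \<le> real (nat \<lceil>a\<rceil>) * real t" by (rule mult_right_mono) simp
  moreover have "a * real t = hbar P n \<epsilon> x + 1" using t by (simp add: a_def)
  ultimately show ?thesis by (simp add: jj_def a_def[symmetric])
qed

lemma jj_le:
  assumes h0: "0 \<le> hbar P n \<epsilon> x" and t: "1 \<le> t"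
  shows "real (jj P n \<epsilon> t x) \<le> (hbar P n \<epsilon> x + 1) / real t + 1"
proof -
  define a where "a = (hbar P n \<epsilon> x + 1) / real t"
  have a0: "0 \<le> a" using h0 t by (simp add: a_def)
  have "real (nat \<lceil>a\<rceil>) \<le> a + 1" using a0 by linarith
  then show ?thesis by (simp add: jj_def a_def[symmetric])
qed

lemma notok_bound:
  fixes P :: "nat \<Rightarrow> ('a::countable list \<times> 'b::countable list) pmf"
  assumes gs: "general_source P" and ui: "uniformly_integrable_source P" and n: "1 \<le> n"
    and eps: "0 < \<epsilon>" "\<epsilon> < 1" and t: "1 \<le> t"
  shows "emeasure (measure_pmf (P n)) {(x, y). \<not> okp P n \<epsilon> t x y} \<le> ennreal \<epsilon>"
proof -
  define NO where "NO = {(x, y). \<not> okp P n \<epsilon> t x y}"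
  have "emeasure (measure_pmf (P n)) NO = (\<integral>\<^sup>+ z. indicator NO z \<partial>measure_pmf (P n))" by simp
  also have "\<dots> = (\<integral>\<^sup>+ x. ennreal (pmf (pX P n) x) * (\<integral>\<^sup>+ y. ennreal (condYX P n y x) * indicator NO (x, y) \<partial>count_space UNIV) \<partial>count_space UNIV)"
    by (rule K2X)
  also have "\<dots> \<le> (\<integral>\<^sup>+ x. ennreal (pmf (pX P n) x) * ennreal \<epsilon> \<partial>count_space UNIV)"
  proof (intro nn_integral_mono)
    fix x
    show "ennreal (pmf (pX P n) x) * (\<integral>\<^sup>+ y. ennreal (condYX P n y x) * indicator NO (x, y) \<partial>count_space UNIV) \<le> ennreal (pmf (pX P n) x) * ennreal \<epsilon>"
    proof (cases "pmf (pX P n) x > 0")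
      case False
      then have "pmf (pX P n) x = 0" using pmf_nonneg[of "pX P n" x] by linarith
      then show ?thesis by simp
    next
      case px: True
      have len: "length x = n" by (rule pX_len[OF gs px])
      have fin: "ExW P n x < \<infinity>" by (rule Ex_finite[OF ui n px])
      have ne: "{a. Tq P n x a \<le> ennreal \<epsilon>} \<noteq> {}" by (rule S_nonempty[of P n x \<epsilon>, OF px eps fin])
      have h0: "0 \<le> hbar P n \<epsilon> x" by (rule hbar_nonneg[of P n x \<epsilon>, OF px eps ne])
      define a where "a = real (jj P n \<epsilon> t x * t)"
      have ha: "hbar P n \<epsilon> x < a" using jj_ge[OF h0 t] unfolding a_def by linarith
      have Ta: "Tq P n x a \<le> ennreal \<epsilon>" by (rule hbar_gt[of P n x \<epsilon>, OF px eps ne ha])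
      have "(\<integral>\<^sup>+ y. ennreal (condYX P n y x) * indicator NO (x, y) \<partial>count_space UNIV) \<le> Tq P n x a"
        unfolding Tq_ind
      proof (intro nn_integral_mono)
        fix y
        show "ennreal (condYX P n y x) * indicator NO (x, y) \<le> ennreal (condYX P n y x) * indicator {y. a < Wd P n x y} y"
        proof (cases "condYX P n y x > 0 \<and> (x, y) \<in> NO")
          case True
          then have cpos: "condYX P n y x > 0" and notok: "\<not> okp P n \<epsilon> t x y" by (auto simp: NO_def)
          have jpos: "pmf (P n) (x, y) > 0" using px cpos by (simp add: joint_eq_X[of P n x y])
          have cxy: "condXY P n x y > 0"
          proof -
            have "pmf (pY P n) y \<ge> pmf (P n) (x, y)" by (rule pmf_le_snd)
            then show ?thesis using jpos by (simp add: condXY_def)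
          qed
          have "condXY P n x y < (1/2) ^ (jj P n \<epsilon> t x * t)" using notok len by (simp add: okp_def not_le)
          also have "(1/2::real) ^ (jj P n \<epsilon> t x * t) = 2 powr (- a)"
          proof -
            have "(2::real) powr a = 2 ^ (jj P n \<epsilon> t x * t)" unfolding a_def by (rule powr_realpow) simp
            then show ?thesis by (simp add: powr_minus power_one_over inverse_eq_divide)
          qed
          finally have "a < Wd P n x y" using Wd_gt_iff[OF cxy] by blast
          then have "indicator {y. a < Wd P n x y} y = (1::ennreal)" by simp
          moreover have "indicator NO (x, y) \<le> (1::ennreal)" by (simp add: indicator_def)
          ultimately show ?thesis by (simp add: mult_left_le)
        next
          case False
          then have "condYX P n y x = 0 \<or> (x, y) \<notin> NO" using condYX_nonneg[of P n y x] by linarith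
          then show ?thesis
          proof
            assume "condYX P n y x = 0" then show ?thesis by simp
          next
            assume "(x, y) \<notin> NO"
            then have "indicator NO (x, y) = (0::ennreal)" by (rule indicator_simps(2))
            then show ?thesis by simp
          qed
        qed
      qed
      also have "\<dots> \<le> ennreal \<epsilon>" by (rule Ta)
      finally show ?thesis by (rule mult_left_mono) simp
    qed
  qed
  also have "\<dots> = (\<integral>\<^sup>+ x. ennreal (pmf (pX P n) x) \<partial>count_space UNIV) * ennreal \<epsilon>"
    by (rule nn_integral_multc) simp
  also have "\<dots> = ennreal \<epsilon>" by (simp add: nn_integral_pmf)
  finally show ?thesis unfolding NO_def .
qed

lemma coll_expect:
  fixes P :: "nat \<Rightarrow> ('a::countable list \<times> 'b::countable list) pmf" and F :: "'a list set"
  assumes fin: "finite F"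
  shows "(\<integral>\<^sup>+ f. emeasure (measure_pmf (P n)) (Coll P n \<epsilon> t F f)
           \<partial>measure_pmf (Pi_pmf F [] (\<lambda>z. pmf_of_set {v. length v = Lb P n \<epsilon> t z}))) \<le> ennreal ((1/2) ^ t)"
proof -
  define \<mu> where "\<mu> = Pi_pmf F [] (\<lambda>z. pmf_of_set {v::bool list. length v = Lb P n \<epsilon> t z})"
  define Ad where "Ad x y = {x'. x' \<noteq> x \<and> jj P n \<epsilon> t x' = jj P n \<epsilon> t x \<and> okp P n \<epsilon> t x' y}" for x y
  define Cnt where "Cnt f x y = (\<integral>\<^sup>+ x'. indicator (Ad x y) x' * indicator {f. binf P n \<epsilon> t f x' = binf P n \<epsilon> t f x} f \<partial>count_space UNIV)" for f x y
  have S1: "emeasure (measure_pmf (P n)) (Coll P n \<epsilon> t F f) \<le> (\<integral>\<^sup>+ xy. indicator F (fst xy) * Cnt f (fst xy) (snd xy) \<partial>measure_pmf (P n))" for f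
  proof -
    have "emeasure (measure_pmf (P n)) (Coll P n \<epsilon> t F f) = (\<integral>\<^sup>+ xy. indicator (Coll P n \<epsilon> t F f) xy \<partial>measure_pmf (P n))" by simp
    also have "\<dots> \<le> (\<integral>\<^sup>+ xy. indicator F (fst xy) * Cnt f (fst xy) (snd xy) \<partial>measure_pmf (P n))"
    proof (intro nn_integral_mono)
      fix xy :: "'a list \<times> 'b list"
      obtain x y where xy: "xy = (x, y)" by (cases xy)
      show "indicator (Coll P n \<epsilon> t F f) xy \<le> indicator F (fst xy) * Cnt f (fst xy) (snd xy)"
      proof (cases "xy \<in> Coll P n \<epsilon> t F f")
        case True
        then obtain x' where xF: "x \<in> F" and x': "x' \<noteq> x" "jj P n \<epsilon> t x' = jj P n \<epsilon> t x" "binf P n \<epsilon> t f x' = binf P n \<epsilon> t f x" "okp P n \<epsilon> t x' y"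
          unfolding xy Coll_def by blast
        have "(1::ennreal) = indicator (Ad x y) x' * indicator {f. binf P n \<epsilon> t f x' = binf P n \<epsilon> t f x} f"
          using x' by (simp add: Ad_def)
        also have "\<dots> \<le> Cnt f x y" unfolding Cnt_def
          by (rule nn_integral_ge_point[where p="\<lambda>x'. indicator (Ad x y) x' * indicator {f. binf P n \<epsilon> t f x' = binf P n \<epsilon> t f x} f"]) simp
        finally show ?thesis using True xF by (simp add: xy)
      next
        case False then show ?thesis by simp
      qed
    qed
    finally show ?thesis .
  qed
  have S3: "(\<integral>\<^sup>+ f. indicator F x * Cnt f x y \<partial>measure_pmf \<mu>) \<le> ennreal ((1/2) ^ t)" for x y
  proof (cases "x \<in> F")
    case False then show ?thesis by simp
  next
    case xF: True
    have "(\<integral>\<^sup>+ f. indicator F x * Cnt f x y \<partial>measure_pmf \<mu>) = (\<integral>\<^sup>+ f. Cnt f x y \<partial>measure_pmf \<mu>)"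
      using xF by simp
    also have "\<dots> = (\<integral>\<^sup>+ x'. \<integral>\<^sup>+ f. indicator (Ad x y) x' * indicator {f. binf P n \<epsilon> t f x' = binf P n \<epsilon> t f x} f \<partial>measure_pmf \<mu> \<partial>count_space UNIV)"
      unfolding Cnt_def by (rule nn_integral_count_pmf_swap)
    also have "\<dots> \<le> (\<integral>\<^sup>+ x'. ennreal ((1/2) ^ t) * ennreal (condXY P n x' y) \<partial>count_space UNIV)"
    proof (intro nn_integral_mono)
      fix x'
      show "(\<integral>\<^sup>+ f. indicator (Ad x y) x' * indicator {f. binf P n \<epsilon> t f x' = binf P n \<epsilon> t f x} f \<partial>measure_pmf \<mu>) \<le> ennreal ((1/2) ^ t) * ennreal (condXY P n x' y)"
      proof (cases "x' \<in> Ad x y")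
        case False then show ?thesis by simp
      next
        case True
        then have x'x: "x' \<noteq> x" and jeq: "jj P n \<epsilon> t x' = jj P n \<epsilon> t x" and ok: "okp P n \<epsilon> t x' y"
          by (auto simp: Ad_def)
        have "(\<integral>\<^sup>+ f. indicator (Ad x y) x' * indicator {f. binf P n \<epsilon> t f x' = binf P n \<epsilon> t f x} f \<partial>measure_pmf \<mu>)
           = (\<integral>\<^sup>+ f. indicator {f. binf P n \<epsilon> t f x' = take (Lb P n \<epsilon> t x) (f x @ replicate (Lb P n \<epsilon> t x) False)} f \<partial>measure_pmf \<mu>)"
          using True by (simp add: binf_def[of P n \<epsilon> t _ x])
        also have "\<dots> \<le> ennreal ((1/2) ^ Lb P n \<epsilon> t x)"
          unfolding \<mu>_def
          by (rule random_component[OF fin xF, where V="\<lambda>f. binf P n \<epsilon> t f x'" and Lf="Lb P n \<epsilon> t"])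
             (use x'x in \<open>simp add: binf_def\<close>)
        also have "(1/2::real) ^ Lb P n \<epsilon> t x = (1/2) ^ t * (1/2) ^ (jj P n \<epsilon> t x' * t)"
          by (simp add: Lb_def jeq power_add[symmetric] algebra_simps)
        also have "ennreal \<dots> \<le> ennreal ((1/2) ^ t * condXY P n x' y)"
          using ok by (intro ennreal_leI mult_left_mono) (simp_all add: okp_def)
        also have "\<dots> = ennreal ((1/2) ^ t) * ennreal (condXY P n x' y)"
          by (rule ennreal_mult) (simp_all add: condXY_nonneg)
        finally show ?thesis .
      qed
    qed
    also have "\<dots> = ennreal ((1/2) ^ t) * (\<integral>\<^sup>+ x'. ennreal (condXY P n x' y) \<partial>count_space UNIV)"
      by (rule nn_integral_cmult) simp
    also have "\<dots> \<le> ennreal ((1/2) ^ t) * 1"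
      by (intro mult_left_mono sum_condXY) simp
    finally show ?thesis by simp
  qed
  have "(\<integral>\<^sup>+ f. emeasure (measure_pmf (P n)) (Coll P n \<epsilon> t F f) \<partial>measure_pmf \<mu>)
     \<le> (\<integral>\<^sup>+ f. \<integral>\<^sup>+ xy. indicator F (fst xy) * Cnt f (fst xy) (snd xy) \<partial>measure_pmf (P n) \<partial>measure_pmf \<mu>)"
    by (intro nn_integral_mono S1)
  also have "\<dots> = (\<integral>\<^sup>+ xy. \<integral>\<^sup>+ f. indicator F (fst xy) * Cnt f (fst xy) (snd xy) \<partial>measure_pmf \<mu> \<partial>measure_pmf (P n))"
    by (rule nn_integral_pmf_swap)
  also have "\<dots> \<le> (\<integral>\<^sup>+ xy. ennreal ((1/2) ^ t) \<partial>measure_pmf (P n))"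
    by (intro nn_integral_mono S3)
  also have "\<dots> = ennreal ((1/2) ^ t)" by simp
  finally show ?thesis unfolding \<mu>_def .
qed

lemma coll_exists:
  fixes P :: "nat \<Rightarrow> ('a::countable list \<times> 'b::countable list) pmf" and F :: "'a list set"
  assumes fin: "finite F" and eta: "0 < \<eta>"
  shows "\<exists>f. emeasure (measure_pmf (P n)) (Coll P n \<epsilon> t F f) \<le> ennreal ((1/2) ^ t + \<eta>)"
proof (rule ccontr)
  define \<mu> where "\<mu> = Pi_pmf F [] (\<lambda>z. pmf_of_set {v::bool list. length v = Lb P n \<epsilon> t z})"
  assume "\<not> ?thesis"
  then have all: "\<And>f. ennreal ((1/2) ^ t + \<eta>) \<le> emeasure (measure_pmf (P n)) (Coll P n \<epsilon> t F f)"
    by (meson linear)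
  have "ennreal ((1/2) ^ t + \<eta>) = (\<integral>\<^sup>+ f. ennreal ((1/2) ^ t + \<eta>) \<partial>measure_pmf \<mu>)" by simp
  also have "\<dots> \<le> (\<integral>\<^sup>+ f. emeasure (measure_pmf (P n)) (Coll P n \<epsilon> t F f) \<partial>measure_pmf \<mu>)"
    by (intro nn_integral_mono all)
  also have "\<dots> \<le> ennreal ((1/2) ^ t)" unfolding \<mu>_def by (rule coll_expect[OF fin])
  finally have "(1/2::real) ^ t + \<eta> \<le> (1/2) ^ t" by (simp add: ennreal_le_iff)
  then show False using eta by simp
qed

lemma code_exists:
  fixes P :: "nat \<Rightarrow> ('a::countable list \<times> 'b::countable list) pmf"
  assumes gs: "general_source P" and ui: "uniformly_integrable_source P" and n: "1 \<le> n"
    and eps: "0 < \<epsilon>" "\<epsilon> < 1" and t: "1 \<le> t" and eta: "0 < \<eta>"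
  shows "\<exists>\<phi> \<psi>. SW_code n \<phi> \<and> SW_error P n \<phi> \<psi> \<le> \<epsilon> + (1/2) ^ t + 2 * \<eta> \<and>
     SW_exp_length P n \<phi> \<le> enn2ereal (ennreal ((real t + 1) / real t) *
        ((\<integral>\<^sup>+ x. ennreal (pmf (pX P n) x * hbar P n \<epsilon> x) \<partial>count_space {x. length x = n}) + 1)
        + ennreal (2 * (real t + 1)))"
proof -
  obtain F where fin: "finite F" and Fm: "measure_pmf.prob (pX P n) (- F) \<le> \<eta>"
    using fin_approx[OF eta, of "pX P n"] by blast
  obtain f where fc: "emeasure (measure_pmf (P n)) (Coll P n \<epsilon> t F f) \<le> ennreal ((1/2) ^ t + \<eta>)"
    using coll_exists[OF fin eta] by blast
  define \<phi> where "\<phi> = enc P n \<epsilon> t f"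
  define \<psi> where "\<psi> = dec P n \<epsilon> t f"
  have code: "SW_code n \<phi>" unfolding \<phi>_def by (rule enc_code)
  have err: "SW_error P n \<phi> \<psi> \<le> \<epsilon> + (1/2) ^ t + 2 * \<eta>"
  proof -
    have "ennreal (SW_error P n \<phi> \<psi>) = emeasure (measure_pmf (P n)) {(x, y). \<psi> (\<phi> x) y \<noteq> x}"
      by (simp add: SW_error_def measure_pmf.emeasure_eq_measure)
    also have "\<dots> \<le> emeasure (measure_pmf (P n)) ({(x, y). \<not> okp P n \<epsilon> t x y} \<union> {(x, y). x \<notin> F} \<union> Coll P n \<epsilon> t F f)"
      unfolding \<phi>_def \<psi>_def by (intro emeasure_mono err_subset) simp
    also have "\<dots> \<le> emeasure (measure_pmf (P n)) ({(x, y). \<not> okp P n \<epsilon> t x y} \<union> {(x, y). x \<notin> F}) + emeasure (measure_pmf (P n)) (Coll P n \<epsilon> t F f)"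
      by (rule emeasure_subadditive) simp_all
    also have "\<dots> \<le> emeasure (measure_pmf (P n)) {(x, y). \<not> okp P n \<epsilon> t x y} + emeasure (measure_pmf (P n)) {(x, y). x \<notin> F} + emeasure (measure_pmf (P n)) (Coll P n \<epsilon> t F f)"
      by (intro add_right_mono emeasure_subadditive) simp_all
    also have "\<dots> \<le> ennreal \<epsilon> + ennreal \<eta> + ennreal ((1/2) ^ t + \<eta>)"
    proof (intro add_mono fc notok_bound[OF gs ui n eps t])
      have eq: "{(x, y). x \<notin> F} = fst -` (- F)" by auto
      have "emeasure (measure_pmf (P n)) {(x, y). x \<notin> F} = emeasure (measure_pmf (pX P n)) (- F)"
        unfolding eq by (simp add: emeasure_map_pmf)
      also have "\<dots> = ennreal (measure_pmf.prob (pX P n) (- F))" by (simp add: measure_pmf.emeasure_eq_measure)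
      also have "\<dots> \<le> ennreal \<eta>" using Fm by (rule ennreal_leI)
      finally show "emeasure (measure_pmf (P n)) {(x, y). x \<notin> F} \<le> ennreal \<eta>" .
    qed
    also have "\<dots> = ennreal (\<epsilon> + \<eta> + ((1/2) ^ t + \<eta>))"
    proof -
      have a1: "ennreal \<epsilon> + ennreal \<eta> = ennreal (\<epsilon> + \<eta>)"
        by (rule ennreal_plus[symmetric]) (use eps eta in auto)
      have a2: "ennreal (\<epsilon> + \<eta>) + ennreal ((1/2) ^ t + \<eta>) = ennreal (\<epsilon> + \<eta> + ((1/2) ^ t + \<eta>))"
        by (rule ennreal_plus[symmetric]) (use eps eta in auto)
      show ?thesis unfolding a1 a2 ..
    qed
    also have "\<epsilon> + \<eta> + ((1/2) ^ t + \<eta>) = \<epsilon> + (1/2::real) ^ t + 2 * \<eta>" by simp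
    finally have le: "ennreal (SW_error P n \<phi> \<psi>) \<le> ennreal (\<epsilon> + (1/2) ^ t + 2 * \<eta>)" .
    have "0 \<le> \<epsilon> + (1/2::real) ^ t + 2 * \<eta>" using eps eta by simp
    then show ?thesis using le by (simp add: ennreal_le_iff)
  qed
  define c1 where "c1 = (real t + 1) / real t"
  define c2 where "c2 = 2 * (real t + 1)"
  have c10: "0 \<le> c1" and c20: "0 \<le> c2" by (simp_all add: c1_def c2_def)
  define Hn where "Hn = (\<integral>\<^sup>+ x. ennreal (pmf (pX P n) x * hbar P n \<epsilon> x) \<partial>count_space {x. length x = n})"
  have "(\<integral>\<^sup>+ xy. ennreal (real (length (\<phi> (fst xy)))) \<partial>measure_pmf (P n))
      = (\<integral>\<^sup>+ x. ennreal (pmf (pX P n) x) * ennreal (real (length (\<phi> x))) \<partial>count_space UNIV)"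
    by (rule Lexp_sum)
  also have "\<dots> = (\<integral>\<^sup>+ x. ennreal (pmf (pX P n) x) * ennreal (real (length (\<phi> x))) \<partial>count_space {x. length x = n})"
  proof (rule nn_integral_count_space_eq)
    fix x :: "'a list" assume "x \<in> UNIV - {x. length x = n}"
    then have "\<not> pmf (pX P n) x > 0" using pX_len[OF gs] by auto
    then have "pmf (pX P n) x = 0" using pmf_nonneg[of "pX P n" x] by linarith
    then show "ennreal (pmf (pX P n) x) * ennreal (real (length (\<phi> x))) = 0" by simp
  qed simp
  also have "\<dots> \<le> (\<integral>\<^sup>+ x. ennreal c1 * ennreal (pmf (pX P n) x * hbar P n \<epsilon> x) + ennreal (c1 + c2) * ennreal (pmf (pX P n) x) \<partial>count_space {x. length x = n})"
  proof (intro nn_integral_mono)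
    fix x assume "x \<in> space (count_space {x::'a list. length x = n})"
    then have len: "length x = n" by simp
    have px: "pmf (pX P n) x > 0" by (rule gs_posX[OF gs len])
    have fin: "ExW P n x < \<infinity>" by (rule Ex_finite[OF ui n px])
    have ne: "{a. Tq P n x a \<le> ennreal \<epsilon>} \<noteq> {}" by (rule S_nonempty[of P n x \<epsilon>, OF px eps fin])
    have h0: "0 \<le> hbar P n \<epsilon> x" by (rule hbar_nonneg[of P n x \<epsilon>, OF px eps ne])
    have "real (length (\<phi> x)) = (real (jj P n \<epsilon> t x) + 1) * (real t + 1)"
      unfolding \<phi>_def enc_len by (simp add: algebra_simps)
    also have "\<dots> \<le> ((hbar P n \<epsilon> x + 1) / real t + 2) * (real t + 1)"
      using jj_le[OF h0 t] by (intro mult_right_mono) simp_all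
    also have "\<dots> = c1 * hbar P n \<epsilon> x + (c1 + c2)"
      using t by (simp add: c1_def c2_def field_simps)
    finally have le: "real (length (\<phi> x)) \<le> c1 * hbar P n \<epsilon> x + (c1 + c2)" .
    have "ennreal (pmf (pX P n) x) * ennreal (real (length (\<phi> x))) = ennreal (pmf (pX P n) x * real (length (\<phi> x)))"
      by (rule ennreal_mult[symmetric]) simp_all
    also have "\<dots> \<le> ennreal (pmf (pX P n) x * (c1 * hbar P n \<epsilon> x + (c1 + c2)))"
      using le by (intro ennreal_leI mult_left_mono) simp_all
    also have "\<dots> = ennreal (c1 * (pmf (pX P n) x * hbar P n \<epsilon> x) + (c1 + c2) * pmf (pX P n) x)"
      by (simp add: algebra_simps)
    also have "\<dots> = ennreal c1 * ennreal (pmf (pX P n) x * hbar P n \<epsilon> x) + ennreal (c1 + c2) * ennreal (pmf (pX P n) x)"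
      using c10 c20 h0 by (simp add: ennreal_plus ennreal_mult)
    finally show "ennreal (pmf (pX P n) x) * ennreal (real (length (\<phi> x))) \<le> ennreal c1 * ennreal (pmf (pX P n) x * hbar P n \<epsilon> x) + ennreal (c1 + c2) * ennreal (pmf (pX P n) x)" .
  qed
  also have "\<dots> = ennreal c1 * Hn + ennreal (c1 + c2) * (\<integral>\<^sup>+ x. ennreal (pmf (pX P n) x) \<partial>count_space {x. length x = n})"
    unfolding Hn_def by (simp add: nn_integral_add nn_integral_cmult)
  also have "\<dots> \<le> ennreal c1 * Hn + ennreal (c1 + c2) * 1"
  proof -
    have "(\<integral>\<^sup>+ x. ennreal (pmf (pX P n) x) \<partial>count_space {x. length x = n}) \<le> (\<integral>\<^sup>+ x. ennreal (pmf (pX P n) x) \<partial>count_space UNIV)"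
      by (rule count_space_mono_int) simp
    also have "\<dots> = 1" by (simp add: nn_integral_pmf)
    finally show ?thesis by (intro add_left_mono mult_left_mono) simp_all
  qed
  also have "\<dots> = ennreal c1 * (Hn + 1) + ennreal c2"
    using c10 c20 by (simp add: ennreal_plus distrib_left add.assoc)
  finally have len: "(\<integral>\<^sup>+ xy. ennreal (real (length (\<phi> (fst xy)))) \<partial>measure_pmf (P n)) \<le> ennreal c1 * (Hn + 1) + ennreal c2" .
  have "SW_exp_length P n \<phi> \<le> enn2ereal (ennreal c1 * (Hn + 1) + ennreal c2)"
    unfolding SW_exp_length_def using len by (simp add: less_eq_ennreal.rep_eq[symmetric])
  then show ?thesis using code err unfolding c1_def c2_def Hn_def by blast
qed

lemma arith_bound:
  fixes nn tt g hr a :: real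
  assumes nn: "1 \<le> nn" and g: "0 < g" and t1: "g * nn \<le> tt" and t2: "tt \<le> g * nn + 1"
    and h0: "0 \<le> hr" and h1: "hr \<le> nn * a" and a: "0 \<le> a"
  shows "((tt + 1) / tt * (hr + 1) + 2 * (tt + 1)) / nn \<le> (1 + 1 / (g * nn)) * (a + 1 / nn) + 2 * g + 4 / nn"
proof -
  have tpos: "0 < tt" using g nn t1 by (smt (verit) mult_pos_pos)
  have np: "0 < nn" using nn by simp
  have e1: "((tt + 1) / tt * (hr + 1) + 2 * (tt + 1)) / nn = (1 + 1 / tt) * ((hr + 1) / nn) + 2 * (tt + 1) / nn"
    using tpos np by (simp add: field_simps)
  have f1: "1 + 1 / tt \<le> 1 + 1 / (g * nn)"
    using t1 g np by (simp add: frac_le)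
  have f2: "(hr + 1) / nn \<le> a + 1 / nn"
    using h1 np by (simp add: field_simps)
  have f3: "(1 + 1 / tt) * ((hr + 1) / nn) \<le> (1 + 1 / (g * nn)) * (a + 1 / nn)"
    using f1 f2 tpos np h0 g by (intro mult_mono) simp_all
  have f4: "2 * (tt + 1) / nn \<le> 2 * g + 4 / nn"
  proof -
    have "2 * (tt + 1) \<le> 2 * (g * nn + 2)" using t2 by simp
    then have "2 * (tt + 1) / nn \<le> 2 * (g * nn + 2) / nn" using np by (simp add: divide_right_mono)
    also have "\<dots> = 2 * g + 4 / nn" using np by (simp add: field_simps)
    finally show ?thesis .
  qed
  show ?thesis unfolding e1 using f3 f4 by linarith
qed

lemma achievability:
  fixes P :: "nat \<Rightarrow> ('a::countable list \<times> 'b::countable list) pmf"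
  assumes gs: "general_source P" and ui: "uniformly_integrable_source P"
    and lt: "(SUP \<epsilon>\<in>{0<..<1}. gfun P \<epsilon>) < ereal r"
  shows "weakly_achievable P r"
proof -
  define S where "S = (SUP \<epsilon>\<in>{0<..<1::real}. gfun P \<epsilon>)"
  have S0: "0 \<le> S"
  proof -
    have "gfun P (1/2) \<le> S" unfolding S_def by (rule SUP_upper) simp
    then show ?thesis using gfun_nonneg[of P "1/2"] by simp
  qed
  have Sr: "S < ereal r" using lt unfolding S_def .
  obtain s where Ss: "S = ereal s" using S0 Sr by (cases S) auto
  have s0: "0 \<le> s" and sr: "s < r" using S0 Sr Ss by simp_all
  define \<gamma> where "\<gamma> = (r - s) / 4"
  have g0: "0 < \<gamma>" using sr by (simp add: \<gamma>_def)
  define a where "a = r - 3 * \<gamma>"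
  have a0: "0 < a" and sa: "s < a" and ar: "a + 2 * \<gamma> < r" using sr s0 by (simp_all add: a_def \<gamma>_def field_simps)
  define ek where "ek k = 1 / (real k + 2)" for k :: nat
  have ek: "0 < ek k" "ek k < 1" for k by (simp_all add: ek_def)
  have Qev: "eventually (\<lambda>n. ereal (1 / real n) * Hs_eps P n (ek k) < ereal a) sequentially" for k
  proof -
    have "gfun P (ek k) \<le> S" unfolding S_def by (rule SUP_upper) (simp add: ek)
    also have "S < ereal a" using Ss sa by simp
    finally have "gfun P (ek k) < ereal a" .
    then show ?thesis unfolding gfun_def by (rule Limsup_lessD)
  qed
  obtain \<kappa> where \<kappa>: "filterlim \<kappa> at_top sequentially"
    and Q\<kappa>: "eventually (\<lambda>n. ereal (1 / real n) * Hs_eps P n (ek (\<kappa> n)) < ereal a) sequentially"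
    using diagonal[of "\<lambda>k n. ereal (1 / real n) * Hs_eps P n (ek k) < ereal a", OF Qev] by blast
  define tt where "tt n = nat \<lceil>\<gamma> * real n\<rceil>" for n :: nat
  have tt1: "1 \<le> tt n" and tt2: "\<gamma> * real n \<le> real (tt n)" and tt3: "real (tt n) \<le> \<gamma> * real n + 1"
    if "1 \<le> n" for n
  proof -
    have "0 < \<gamma> * real n" using g0 that by simp
    then show "1 \<le> tt n" "\<gamma> * real n \<le> real (tt n)" "real (tt n) \<le> \<gamma> * real n + 1"
      unfolding tt_def by linarith+
  qed
  define Hn where "Hn n = (\<integral>\<^sup>+ x. ennreal (pmf (pX P n) x * hbar P n (ek (\<kappa> n)) x) \<partial>count_space {x. length x = n})" for n
  define propc where "propc n \<Phi> \<longleftrightarrow> SW_code n (fst \<Phi>) \<and> (1 \<le> n \<longrightarrow>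
      SW_error P n (fst \<Phi>) (snd \<Phi>) \<le> ek (\<kappa> n) + (1/2) ^ (tt n) + 2 * (1 / real n) \<and>
      SW_exp_length P n (fst \<Phi>) \<le> enn2ereal (ennreal ((real (tt n) + 1) / real (tt n)) * (Hn n + 1) + ennreal (2 * (real (tt n) + 1))))"
    for n and \<Phi> :: "('a list \<Rightarrow> bool list) \<times> (bool list \<Rightarrow> 'b list \<Rightarrow> 'a list)"
  have "\<forall>n. \<exists>\<Phi>. propc n \<Phi>"
  proof
    fix n
    show "\<exists>\<Phi>. propc n \<Phi>"
    proof (cases "1 \<le> n")
      case True
      have "\<exists>\<phi> \<psi>. SW_code n \<phi> \<and> SW_error P n \<phi> \<psi> \<le> ek (\<kappa> n) + (1/2) ^ (tt n) + 2 * (1 / real n) \<and>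
        SW_exp_length P n \<phi> \<le> enn2ereal (ennreal ((real (tt n) + 1) / real (tt n)) * (Hn n + 1) + ennreal (2 * (real (tt n) + 1)))"
        unfolding Hn_def by (rule code_exists[OF gs ui True ek(1) ek(2) tt1[OF True]]) (use True in simp)
      then obtain \<phi> \<psi> where c: "SW_code n \<phi> \<and> SW_error P n \<phi> \<psi> \<le> ek (\<kappa> n) + (1/2) ^ (tt n) + 2 * (1 / real n) \<and>
        SW_exp_length P n \<phi> \<le> enn2ereal (ennreal ((real (tt n) + 1) / real (tt n)) * (Hn n + 1) + ennreal (2 * (real (tt n) + 1)))"
        by blast
      have "propc n (\<phi>, \<psi>)" unfolding propc_def fst_conv snd_conv using c by blast
      then show ?thesis by blast
    next
      case False
      have "SW_code n (\<lambda>x. [])" by (simp add: SW_code_def prefix_free_def)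
      then show ?thesis using False unfolding propc_def by (intro exI[of _ "(\<lambda>x. [], \<lambda>c y. [])"]) simp
    qed
  qed
  then obtain \<Phi> where \<Phi>: "\<And>n. propc n (\<Phi> n)" by metis
  define \<phi> where "\<phi> n = fst (\<Phi> n)" for n
  define \<psi> where "\<psi> n = snd (\<Phi> n)" for n
  have code: "SW_code n (\<phi> n)" for n using \<Phi>[of n] by (simp add: propc_def \<phi>_def)
  have errb: "SW_error P n (\<phi> n) (\<psi> n) \<le> ek (\<kappa> n) + (1/2) ^ (tt n) + 2 * (1 / real n)" if "1 \<le> n" for n
    using \<Phi>[of n] that by (simp add: propc_def \<phi>_def \<psi>_def)
  have lenb: "SW_exp_length P n (\<phi> n) \<le> enn2ereal (ennreal ((real (tt n) + 1) / real (tt n)) * (Hn n + 1) + ennreal (2 * (real (tt n) + 1)))"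
    if "1 \<le> n" for n
    using \<Phi>[of n] that by (simp add: propc_def \<phi>_def)
  have err: "(\<lambda>n. SW_error P n (\<phi> n) (\<psi> n)) \<longlonglongrightarrow> 0"
  proof (rule tendsto_sandwich)
    show "eventually (\<lambda>n. 0 \<le> SW_error P n (\<phi> n) (\<psi> n)) sequentially" by (simp add: SW_error_def)
    show "eventually (\<lambda>n. SW_error P n (\<phi> n) (\<psi> n) \<le> ek (\<kappa> n) + 2 powr (- (\<gamma> * real n)) + 2 * (1 / real n)) sequentially"
      unfolding eventually_sequentially
    proof (intro exI[of _ 1] allI impI)
      fix n :: nat assume n: "1 \<le> n"
      have "(1/2::real) ^ (tt n) = 2 powr (- real (tt n))"
        by (simp add: powr_minus powr_realpow power_one_over inverse_eq_divide)
      also have "\<dots> \<le> 2 powr (- (\<gamma> * real n))" using tt2[OF n] by (intro powr_mono) simp_all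
      finally show "SW_error P n (\<phi> n) (\<psi> n) \<le> ek (\<kappa> n) + 2 powr (- (\<gamma> * real n)) + 2 * (1 / real n)"
        using errb[OF n] by linarith
    qed
    show "(\<lambda>n. 0) \<longlonglongrightarrow> (0::real)" by simp
    have e1: "(\<lambda>n. ek (\<kappa> n)) \<longlonglongrightarrow> 0"
    proof -
      have "filterlim (\<lambda>k. 2 + real k) at_top sequentially"
        by (rule filterlim_tendsto_add_at_top[OF tendsto_const filterlim_real_sequentially])
      then have "filterlim (\<lambda>k::nat. real k + 2) at_infinity sequentially"
        by (simp add: add.commute filterlim_at_top_imp_at_infinity)
      then have "(\<lambda>k. 1 / (real k + 2)) \<longlonglongrightarrow> (0::real)"
        by (rule tendsto_divide_0[OF tendsto_const])
      then show ?thesis unfolding ek_def by (rule filterlim_compose[OF _ \<kappa>])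
    qed
    have "(\<lambda>n. ek (\<kappa> n) + 2 powr (- (\<gamma> * real n)) + 2 * (1 / real n)) \<longlonglongrightarrow> 0 + 0 + 2 * 0"
      by (intro tendsto_add tendsto_mult e1 pow_tendsto g0 tendsto_const lim_inverse_n')
    then show "(\<lambda>n. ek (\<kappa> n) + 2 powr (- (\<gamma> * real n)) + 2 * (1 / real n)) \<longlonglongrightarrow> 0" by simp
  qed
  define B where "B n = (1 + 1 / (\<gamma> * real n)) * (a + 1 / real n) + 2 * \<gamma> + 4 / real n" for n :: nat
  have Blim: "B \<longlonglongrightarrow> (1 + (1 / \<gamma>) * 0) * (a + 0) + 2 * \<gamma> + 4 * 0"
  proof -
    have "(\<lambda>n. (1 + (1 / \<gamma>) * (1 / real n)) * (a + 1 / real n) + 2 * \<gamma> + 4 * (1 / real n)) \<longlonglongrightarrow> (1 + (1 / \<gamma>) * 0) * (a + 0) + 2 * \<gamma> + 4 * 0"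
      by (intro tendsto_add tendsto_mult tendsto_const lim_inverse_n')
    moreover have "(\<lambda>n. (1 + (1 / \<gamma>) * (1 / real n)) * (a + 1 / real n) + 2 * \<gamma> + 4 * (1 / real n)) = B"
      unfolding B_def by (intro ext) simp
    ultimately show ?thesis by simp
  qed
  then have "eventually (\<lambda>n. B n < r) sequentially"
    using ar by (intro order_tendstoD(2)) simp_all
  have rate: "limsup (\<lambda>n. ereal (1 / real n) * SW_exp_length P n (\<phi> n)) \<le> ereal r"
  proof (rule Limsup_bounded)
    have ev1: "eventually (\<lambda>n. 1 \<le> n) sequentially" unfolding eventually_sequentially by (intro exI[of _ 1]) simp
    show "eventually (\<lambda>n. ereal (1 / real n) * SW_exp_length P n (\<phi> n) \<le> ereal r) sequentially"
      using Q\<kappa> ev1 \<open>eventually (\<lambda>n. B n < r) sequentially\<close>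
    proof eventually_elim
      case (elim n)
      then have n: "1 \<le> n" and Qn: "ereal (1 / real n) * Hs_eps P n (ek (\<kappa> n)) < ereal a" and Bn: "B n < r" by auto
      have np: "0 < real n" using n by simp
      have Hfin: "Hn n \<noteq> \<top>"
      proof
        assume "Hn n = \<top>"
        then have "Hs_eps P n (ek (\<kappa> n)) = \<infinity>" by (simp add: Hs_eps_def Hn_def[symmetric])
        then show False using Qn np by simp
      qed
      define hr where "hr = enn2real (Hn n)"
      have hr0: "0 \<le> hr" by (simp add: hr_def)
      have Hhr: "Hn n = ennreal hr" using Hfin by (simp add: hr_def ennreal_enn2real_if)
      have "ereal (hr / real n) < ereal a"
        using Qn unfolding Hs_eps_def Hn_def[symmetric] Hhr using hr0 by (simp add: divide_inverse mult.commute)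
      then have "hr / real n < a" by simp
      then have hra: "hr \<le> real n * a" using np by (simp add: field_simps)
      define c1 where "c1 = (real (tt n) + 1) / real (tt n)"
      define c2 where "c2 = 2 * (real (tt n) + 1)"
      have c10: "0 \<le> c1" and c20: "0 \<le> c2" by (simp_all add: c1_def c2_def)
      have eqE: "ennreal c1 * (Hn n + 1) + ennreal c2 = ennreal (c1 * (hr + 1) + c2)"
      proof -
        have q1: "ennreal hr + 1 = ennreal (hr + 1)" using hr0 by simp
        have q2: "ennreal c1 * ennreal (hr + 1) = ennreal (c1 * (hr + 1))" using c10 hr0 by (intro ennreal_mult[symmetric]) simp_all
        have q3: "ennreal (c1 * (hr + 1)) + ennreal c2 = ennreal (c1 * (hr + 1) + c2)" using c10 c20 hr0 by (intro ennreal_plus[symmetric]) simp_all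
        show ?thesis unfolding Hhr q1 q2 q3 ..
      qed
      have "SW_exp_length P n (\<phi> n) \<le> enn2ereal (ennreal (c1 * (hr + 1) + c2))"
        using lenb[OF n] unfolding c1_def[symmetric] c2_def[symmetric] eqE .
      also have "enn2ereal (ennreal (c1 * (hr + 1) + c2)) = ereal (c1 * (hr + 1) + c2)"
        using c10 c20 hr0 by (intro enn2ereal_ennreal) simp
      finally have "SW_exp_length P n (\<phi> n) \<le> ereal (c1 * (hr + 1) + c2)" .
      then have "ereal (1 / real n) * SW_exp_length P n (\<phi> n) \<le> ereal (1 / real n) * ereal (c1 * (hr + 1) + c2)"
        by (intro ereal_mult_left_mono) simp_all
      also have "\<dots> = ereal ((c1 * (hr + 1) + c2) / real n)" by simp
      also have "(c1 * (hr + 1) + c2) / real n \<le> B n"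
        unfolding c1_def c2_def B_def
        by (rule arith_bound) (use n g0 tt2[OF n] tt3[OF n] hr0 hra a0 in simp_all)
      then have "ereal ((c1 * (hr + 1) + c2) / real n) \<le> ereal r" using Bn by simp
      finally show ?case .
    qed
  qed
  show ?thesis unfolding weakly_achievable_def
    using code err rate by blast
qed

theorem theorem7:
  fixes P :: "nat \<Rightarrow> ('a::countable list \<times> 'b::countable list) pmf"
  assumes "general_source P"
    and "uniformly_integrable_source P"
  shows "R_SW P = Hs_bar P"
proof -
  note gs = assms(1) and ui = assms(2)
  define S where "S = (SUP \<epsilon>\<in>{0<..<1::real}. gfun P \<epsilon>)"
  have HS: "Hs_bar P = S" unfolding S_def by (rule Hs_bar_SUP[OF gs ui])
  have lower: "S \<le> ereal R" if "weakly_achievable P R" for R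
    unfolding S_def by (rule SUP_least) (use conv_g[OF gs ui that] in simp)
  have "R_SW P = S"
  proof (rule antisym)
    show "S \<le> R_SW P" unfolding R_SW_def by (rule Inf_greatest) (use lower in auto)
  next
    show "R_SW P \<le> S"
    proof (rule dense_ge)
      fix y assume "S < y"
      show "R_SW P \<le> y"
      proof (cases y)
        case (real r)
        then have "weakly_achievable P r" using achievability[OF gs ui] \<open>S < y\<close> unfolding S_def by simp
        then show ?thesis unfolding R_SW_def real by (intro Inf_lower) simp
      next
        case PInf then show ?thesis by simp
      next
        case MInf then show ?thesis using \<open>S < y\<close> by simp
      qed
    qed
  qed
  then show ?thesis using HS by simp
qed


end
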